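(* Under the assumptions (a) the family of expectation matrices $\{\mathbf M_\theta\}_{\theta\in\mathcal I}$ is good with respect to $\nu$, (b) the process is uniformly allowable, (c) there exists $M<\infty$ with $\frac{\partial^2 f_\theta^{(k)}}{\partial s_j\partial s_i}(\mathbf 1)<M$ for all $\theta\in\mathcal I$, $i,j,k\in[N]$: if $\lambda(\nu,\mathcal M)>0$ then $\mathbf q(\overline{\boldsymbol\theta})<\mathbf 1$ (every coordinate strictly less than $1$) for $\nu$-a.e. $\overline{\boldsymbol\theta}\in\Sigma$.
   Context: $N\ge2$, $\mathcal I$ countable, $\Sigma=\mathcal I^{\mathbb N}$ with shift $\sigma$, $\nu$ a $\sigma$-invariant ergodic probability measure on $\Sigma$; $[N]=\{0,\dots,N-1\}$; $\mathbf 0,\mathbf 1$ all-zero/all-one vectors; vector inequalities componentwise. For $\theta\in\mathcal I$, $\mathbf f_\theta=(f_\theta^{(0)},\dots,f_\theta^{(N-1)})$ with $f_\theta^{(i)}(\mathbf s)=\sum_{\mathbf z\in\mathbb N_0^N}f_\theta^{(i)}[\mathbf z]\mathbf s^{\mathbf z}$ pgfs on $\mathbb N_0^N$. In environment $\overline{\boldsymbol\theta}=(\theta_1,\theta_2,\dots)$, each type-$i$ individual of generation $n-1$ independently produces an offspring vector $\mathbf y$ ($y_j$ = number of type-$j$ children) with probability $f_{\theta_n}^{(i)}[\mathbf y]$; $\mathbf Z_n$ is the sum. $\mathbf q(\overline{\boldsymbol\theta})=\lim_n\mathbf f_{\theta_1}\circ\cdots\circ\mathbf f_{\theta_n}(\mathbf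 0)$ is the vector of extinction probabilities, $q^{(k)}$ starting from one type-$k$ individual. $\mathbf M_\theta(i,k)=\partial f_\theta^{(i)}/\partial s_k(\mathbf 1)$ (finite). Allowable: each row and column has a positive entry. For nonnegative $\mathbf B$: $\|\mathbf B\|$ = sum of entries, $\|\mathbf B\|_1$ = max column sum, $(\mathbf B)_*$ = min column sum. Good: all $\mathbf M_\theta$ allowable, $\int|\log\|\mathbf M_{\theta_1}\|_1|d\nu+\int|\log(\mathbf M_{\theta_1})_*|d\nu<\infty$, and some word $\boldsymbol\theta\in\mathcal I^n$ with $\nu(\{\overline{\boldsymbol\theta}|_n=\boldsymbol\theta\})>0$ has $\mathbf M_{\theta_1}\cdots\mathbf M_{\theta_n}$ strictly positive. $\lambda(\nu,\mathcal M)=\lim_n\frac1n\log\|\mathbf M_{\theta_1}\cdots\mathbf M_{\theta_n}\|$ ($\nu$-a.s. constant). Uniformly allowable: there is $\alpha>0$ with $\inf\{\sum_{\mathbf w:\,w_i\ne0}f_\theta^{(k)}[\mathbf w]:\theta\in\mathcal I,\ \mathbf M_\theta(k,i)>0\}>\alpha$. *)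

theory Defs
  imports "HOL-Probability.Probability"
begin

text \<open>Offspring vectors in N_0^N, represented as functions nat => nat vanishing from N on.\<close>
definition vecs :: "nat \<Rightarrow> (nat \<Rightarrow> nat) set" where
  "vecs N = {z. \<forall>j. N \<le> j \<longrightarrow> z j = 0}"

definition offspring_law :: "nat \<Rightarrow> ((nat \<Rightarrow> nat) \<Rightarrow> real) \<Rightarrow> bool" where
  "offspring_law N p \<longleftrightarrow> (\<forall>z\<in>vecs N. 0 \<le> p z) \<and> (p has_sum 1) (vecs N)"

definition pgf :: "nat \<Rightarrow> ((nat \<Rightarrow> nat) \<Rightarrow> real) \<Rightarrow> (nat \<Rightarrow> real) \<Rightarrow> real" where
  "pgf N p s = (\<Sum>\<^sub>\<infinity> z\<in>vecs N. p z * (\<Prod>j<N. s j ^ z j))"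

text \<open>The vector of pgfs f_theta = (f_theta^(0),...,f_theta^(N-1)); f theta i z = f_theta^(i)[z].\<close>
definition pgf_vec :: "nat \<Rightarrow> ('i \<Rightarrow> nat \<Rightarrow> (nat \<Rightarrow> nat) \<Rightarrow> real) \<Rightarrow> 'i \<Rightarrow> (nat \<Rightarrow> real) \<Rightarrow> nat \<Rightarrow> real" where
  "pgf_vec N f \<theta> s = (\<lambda>i. if i < N then pgf N (f \<theta> i) s else 0)"

fun pgf_comp :: "nat \<Rightarrow> ('i \<Rightarrow> nat \<Rightarrow> (nat \<Rightarrow> nat) \<Rightarrow> real) \<Rightarrow> 'i list \<Rightarrow> (nat \<Rightarrow> real) \<Rightarrow> nat \<Rightarrow> real" where
  "pgf_comp N f [] s = s"
| "pgf_comp N f (\<theta> # ws) s = pgf_vec N f \<theta> (pgf_comp N f ws s)"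

text \<open>Extinction probability q^(k)(omega), environment omega = (omega 0, omega 1, ...) = (theta_1, theta_2, ...).\<close>
definition extinction_prob :: "nat \<Rightarrow> ('i \<Rightarrow> nat \<Rightarrow> (nat \<Rightarrow> nat) \<Rightarrow> real) \<Rightarrow> (nat \<Rightarrow> 'i) \<Rightarrow> nat \<Rightarrow> real" where
  "extinction_prob N f \<omega> k = lim (\<lambda>n. pgf_comp N f (map \<omega> [0..<n]) (\<lambda>_. 0) k)"

text \<open>Mean matrix M_theta(i,k) = d f_theta^(i) / d s_k (1) = sum_z z_k f_theta^(i)[z].\<close>
definition mean_matrix :: "nat \<Rightarrow> ('i \<Rightarrow> nat \<Rightarrow> (nat \<Rightarrow> nat) \<Rightarrow> real) \<Rightarrow> 'i \<Rightarrow> nat \<Rightarrow> nat \<Rightarrow> real" where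
  "mean_matrix N f \<theta> i k = (\<Sum>\<^sub>\<infinity> z\<in>vecs N. real (z k) * f \<theta> i z)"

text \<open>Second partial derivative d^2 f_theta^(k) / ds_j ds_i at 1: sum_z z_i (z_j - [i=j]) f_theta^(k)[z].\<close>
definition second_deriv_term :: "nat \<Rightarrow> nat \<Rightarrow> ('i \<Rightarrow> nat \<Rightarrow> (nat \<Rightarrow> nat) \<Rightarrow> real) \<Rightarrow> 'i \<Rightarrow> nat \<Rightarrow> (nat \<Rightarrow> nat) \<Rightarrow> real" where
  "second_deriv_term i j f \<theta> k z = real (z i) * (real (z j) - (if i = j then 1 else 0)) * f \<theta> k z"

definition second_deriv :: "nat \<Rightarrow> ('i \<Rightarrow> nat \<Rightarrow> (nat \<Rightarrow> nat) \<Rightarrow> real) \<Rightarrow> 'i \<Rightarrow> nat \<Rightarrow> nat \<Rightarrow> nat \<Rightarrow> real" where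
  "second_deriv N f \<theta> k i j = (\<Sum>\<^sub>\<infinity> z\<in>vecs N. second_deriv_term i j f \<theta> k z)"

text \<open>N x N matrices as nat => nat => real, indices in [N].\<close>
definition mat_mult :: "nat \<Rightarrow> (nat \<Rightarrow> nat \<Rightarrow> real) \<Rightarrow> (nat \<Rightarrow> nat \<Rightarrow> real) \<Rightarrow> nat \<Rightarrow> nat \<Rightarrow> real" where
  "mat_mult N A B = (\<lambda>i k. \<Sum>j<N. A i j * B j k)"

definition mat_id :: "nat \<Rightarrow> nat \<Rightarrow> real" where
  "mat_id = (\<lambda>i k. if i = k then 1 else 0)"

fun Mprod :: "nat \<Rightarrow> ('i \<Rightarrow> nat \<Rightarrow> nat \<Rightarrow> real) \<Rightarrow> 'i list \<Rightarrow> nat \<Rightarrow> nat \<Rightarrow> real" where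
  "Mprod N M [] = mat_id"
| "Mprod N M (\<theta> # ws) = mat_mult N (M \<theta>) (Mprod N M ws)"

definition mat_sum :: "nat \<Rightarrow> (nat \<Rightarrow> nat \<Rightarrow> real) \<Rightarrow> real" where
  "mat_sum N B = (\<Sum>i<N. \<Sum>k<N. B i k)"

definition col_max :: "nat \<Rightarrow> (nat \<Rightarrow> nat \<Rightarrow> real) \<Rightarrow> real" where
  "col_max N B = Max ((\<lambda>k. \<Sum>i<N. B i k) ` {..<N})"

definition col_min :: "nat \<Rightarrow> (nat \<Rightarrow> nat \<Rightarrow> real) \<Rightarrow> real" where
  "col_min N B = Min ((\<lambda>k. \<Sum>i<N. B i k) ` {..<N})"

definition allowable :: "nat \<Rightarrow> (nat \<Rightarrow> nat \<Rightarrow> real) \<Rightarrow> bool" where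
  "allowable N B \<longleftrightarrow> (\<forall>i<N. \<exists>k<N. B i k > 0) \<and> (\<forall>k<N. \<exists>i<N. B i k > 0)"

definition strictly_pos :: "nat \<Rightarrow> (nat \<Rightarrow> nat \<Rightarrow> real) \<Rightarrow> bool" where
  "strictly_pos N B \<longleftrightarrow> (\<forall>i<N. \<forall>k<N. B i k > 0)"

definition good :: "nat \<Rightarrow> (nat \<Rightarrow> 'i) measure \<Rightarrow> ('i \<Rightarrow> nat \<Rightarrow> nat \<Rightarrow> real) \<Rightarrow> bool" where
  "good N \<nu> M \<longleftrightarrow>
     (\<forall>\<theta>. allowable N (M \<theta>))
   \<and> integrable \<nu> (\<lambda>\<omega>. \<bar>ln (col_max N (M (\<omega> 0)))\<bar>)
   \<and> integrable \<nu> (\<lambda>\<omega>. \<bar>ln (col_min N (M (\<omega> 0)))\<bar>)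
   \<and> (\<exists>ws. ws \<noteq> [] \<and> measure \<nu> {\<omega>\<in>space \<nu>. \<forall>j<length ws. \<omega> j = ws ! j} > 0
            \<and> strictly_pos N (Mprod N M ws))"

definition unif_allowable :: "nat \<Rightarrow> ('i \<Rightarrow> nat \<Rightarrow> (nat \<Rightarrow> nat) \<Rightarrow> real) \<Rightarrow> bool" where
  "unif_allowable N f \<longleftrightarrow> (\<exists>\<alpha>>0.
     Inf {(\<Sum>\<^sub>\<infinity> w\<in>{w\<in>vecs N. w i \<noteq> 0}. f \<theta> k w) | \<theta> k i.
            k < N \<and> i < N \<and> mean_matrix N f \<theta> k i > 0} > \<alpha>)"

definition shift :: "(nat \<Rightarrow> 'a) \<Rightarrow> nat \<Rightarrow> 'a" where
  "shift \<omega> = (\<lambda>n. \<omega> (Suc n))"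

definition ergodic_shift_measure :: "(nat \<Rightarrow> 'i) measure \<Rightarrow> bool" where
  "ergodic_shift_measure \<nu> \<longleftrightarrow>
     prob_space \<nu>
   \<and> sets \<nu> = sets (PiM UNIV (\<lambda>_::nat. count_space (UNIV :: 'i set)))
   \<and> shift \<in> measurable \<nu> \<nu>
   \<and> (\<forall>A\<in>sets \<nu>. emeasure \<nu> (shift -` A \<inter> space \<nu>) = emeasure \<nu> A)
   \<and> (\<forall>A\<in>sets \<nu>. shift -` A \<inter> space \<nu> = A \<longrightarrow> emeasure \<nu> A = 0 \<or> emeasure \<nu> A = 1)"

end

theory Submission
  imports Defs
begin

lemma has_sum_finsum:
  fixes f :: "'b \<Rightarrow> 'a \<Rightarrow> real"
  assumes "finite I" "\<And>i. i \<in> I \<Longrightarrow> (f i has_sum a i) A"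
  shows "((\<lambda>x. \<Sum>i\<in>I. f i x) has_sum (\<Sum>i\<in>I. a i)) A"
  using assms by (induction I rule: finite_induct) (auto intro: has_sum_add)

lemma has_sum_diff_real:
  fixes f g :: "'a \<Rightarrow> real"
  assumes "(f has_sum a) A" "(g has_sum b) A"
  shows "((\<lambda>x. f x - g x) has_sum (a - b)) A"
proof -
  have "((\<lambda>x. f x + (-1) * g x) has_sum (a + (-1) * b)) A"
    by (intro has_sum_add assms has_sum_cmult_right)
  then show ?thesis by simp
qed

definition inbox :: "nat \<Rightarrow> (nat \<Rightarrow> real) \<Rightarrow> bool" where
  "inbox N s \<longleftrightarrow> (\<forall>j<N. 0 \<le> s j \<and> s j \<le> 1)"

lemma prod_box:
  assumes "inbox N s"
  shows "0 \<le> (\<Prod>j<N. s j ^ z j)" "(\<Prod>j<N. s j ^ z j) \<le> (1::real)"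
  using assms unfolding inbox_def
  by (auto intro!: prod_nonneg prod_le_1 power_le_one)

lemma law_nonneg: "offspring_law N p \<Longrightarrow> z \<in> vecs N \<Longrightarrow> 0 \<le> p z"
  unfolding offspring_law_def by auto

lemma law_sum: "offspring_law N p \<Longrightarrow> (p has_sum 1) (vecs N)"
  unfolding offspring_law_def by auto

lemma law_summable: "offspring_law N p \<Longrightarrow> p summable_on (vecs N)"
  using law_sum summable_on_def by blast

lemma pgf_summable:
  assumes "offspring_law N p" "inbox N s"
  shows "(\<lambda>z. p z * (\<Prod>j<N. s j ^ z j)) summable_on vecs N"
proof (rule summable_on_comparison_test[OF law_summable[OF assms(1)]])
  fix z assume z: "z \<in> vecs N"
  show "p z * (\<Prod>j<N. s j ^ z j) \<le> p z"
    using prod_box[OF assms(2)] law_nonneg[OF assms(1) z] by (simp add: mult_left_le)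
  show "0 \<le> p z * (\<Prod>j<N. s j ^ z j)"
    using prod_box[OF assms(2)] law_nonneg[OF assms(1) z] by simp
qed

lemma pgf_has_sum:
  assumes "offspring_law N p" "inbox N s"
  shows "((\<lambda>z. p z * (\<Prod>j<N. s j ^ z j)) has_sum pgf N p s) (vecs N)"
  using pgf_summable[OF assms] unfolding pgf_def by (simp add: has_sum_infsum)

lemma pgf_nonneg:
  assumes "offspring_law N p" "inbox N s"
  shows "0 \<le> pgf N p s"
  unfolding pgf_def
  using prod_box[OF assms(2)] law_nonneg[OF assms(1)] by (intro infsum_nonneg) auto

lemma pgf_le1:
  assumes "offspring_law N p" "inbox N s"
  shows "pgf N p s \<le> 1"
proof -
  have "pgf N p s \<le> infsum p (vecs N)"
    unfolding pgf_def
    using prod_box[OF assms(2)] law_nonneg[OF assms(1)]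
    by (intro infsum_mono pgf_summable assms law_summable) (simp add: mult_left_le)
  also have "\<dots> = 1" using law_sum[OF assms(1)] by (simp add: infsumI)
  finally show ?thesis .
qed

lemma pgf_mono:
  assumes "offspring_law N p" "inbox N s" "inbox N t" "\<And>j. j < N \<Longrightarrow> s j \<le> t j"
  shows "pgf N p s \<le> pgf N p t"
  unfolding pgf_def
proof (intro infsum_mono pgf_summable assms)
  fix z assume z: "z \<in> vecs N"
  have "(\<Prod>j<N. s j ^ z j) \<le> (\<Prod>j<N. t j ^ z j)"
    using assms(2,4) unfolding inbox_def by (intro prod_mono) (auto intro: power_mono)
  then show "p z * (\<Prod>j<N. s j ^ z j) \<le> p z * (\<Prod>j<N. t j ^ z j)"
    using law_nonneg[OF assms(1) z] by (simp add: mult_left_mono)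
qed

lemma pgf_zero_ones:
  assumes "offspring_law N p" "inbox N s"
  shows "((\<lambda>z. p z * (1 - (\<Prod>j<N. s j ^ z j))) has_sum (1 - pgf N p s)) (vecs N)"
proof -
  have "((\<lambda>z. p z - p z * (\<Prod>j<N. s j ^ z j)) has_sum (1 - pgf N p s)) (vecs N)"
    by (intro has_sum_diff_real law_sum pgf_has_sum assms)
  then show ?thesis by (simp add: right_diff_distrib)
qed

definition mom1 :: "nat \<Rightarrow> ((nat \<Rightarrow> nat) \<Rightarrow> real) \<Rightarrow> nat \<Rightarrow> real" where
  "mom1 N p j = infsum (\<lambda>z. real (z j) * p z) (vecs N)"

definition mom2 :: "nat \<Rightarrow> ((nat \<Rightarrow> nat) \<Rightarrow> real) \<Rightarrow> nat \<Rightarrow> nat \<Rightarrow> real" where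
  "mom2 N p j l = infsum (\<lambda>z. real (z j) * (real (z l) - (if j = l then 1 else 0)) * p z) (vecs N)"

definition moment_hyps :: "nat \<Rightarrow> ((nat \<Rightarrow> nat) \<Rightarrow> real) \<Rightarrow> real \<Rightarrow> real \<Rightarrow> bool" where
  "moment_hyps N p Mb \<alpha> \<longleftrightarrow> offspring_law N p
     \<and> (\<forall>j<N. (\<lambda>z. real (z j) * p z) summable_on vecs N)
     \<and> (\<forall>j<N. \<forall>l<N. (\<lambda>z. real (z j) * (real (z l) - (if j = l then 1 else 0)) * p z) summable_on vecs N
                  \<and> mom2 N p j l < Mb)
     \<and> (\<forall>j<N. mom1 N p j > 0 \<longrightarrow> mom1 N p j \<ge> \<alpha>) \<and> \<alpha> > 0"

lemma mh_law: "moment_hyps N p Mb \<alpha> \<Longrightarrow> offspring_law N p"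
  by (simp add: moment_hyps_def)

lemma mh_m1: "moment_hyps N p Mb \<alpha> \<Longrightarrow> j < N \<Longrightarrow> ((\<lambda>z. real (z j) * p z) has_sum mom1 N p j) (vecs N)"
  unfolding moment_hyps_def mom1_def by auto

lemma mh_sq: "moment_hyps N p Mb \<alpha> \<Longrightarrow> j < N \<Longrightarrow>
   ((\<lambda>z. real (z j) * (real (z j) - 1) * p z) has_sum mom2 N p j j) (vecs N)"
proof -
  assume h: "moment_hyps N p Mb \<alpha>" "j < N"
  then have "(\<lambda>z. real (z j) * (real (z j) - (if j = j then 1 else 0)) * p z) summable_on vecs N"
    unfolding moment_hyps_def by blast
  then show ?thesis unfolding mom2_def by (simp add: has_sum_infsum)
qed

lemma mh_sq_bound: "moment_hyps N p Mb \<alpha> \<Longrightarrow> j < N \<Longrightarrow> mom2 N p j j < Mb"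
  unfolding moment_hyps_def by auto

lemma mom1_nonneg: "moment_hyps N p Mb \<alpha> \<Longrightarrow> 0 \<le> mom1 N p j"
proof -
  assume h: "moment_hyps N p Mb \<alpha>"
  show ?thesis unfolding mom1_def
    by (intro infsum_nonneg) (use law_nonneg[OF mh_law[OF h]] in auto)
qed

lemma mom2_diag_nonneg: "moment_hyps N p Mb \<alpha> \<Longrightarrow> j < N \<Longrightarrow> 0 \<le> mom2 N p j j"
proof -
  assume h: "moment_hyps N p Mb \<alpha>" "j < N"
  have "\<And>z. z \<in> vecs N \<Longrightarrow> 0 \<le> real (z j) * (real (z j) - 1) * p z"
  proof -
    fix z assume "z \<in> vecs N"
    then have "0 \<le> p z" using law_nonneg mh_law h by blast
    moreover have "0 \<le> real (z j) * (real (z j) - 1)" by (cases "z j") auto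
    ultimately show "0 \<le> real (z j) * (real (z j) - 1) * p z" by simp
  qed
  then show ?thesis using has_sum_nonneg mh_sq[OF h] by blast
qed

lemma Mb_pos: "moment_hyps N p Mb \<alpha> \<Longrightarrow> 0 < N \<Longrightarrow> 0 < Mb"
  using mom2_diag_nonneg[of N p Mb \<alpha> 0] mh_sq_bound[of N p Mb \<alpha> 0] by linarith

lemma mom1_bound: 
  assumes h: "moment_hyps N p Mb \<alpha>" "j < N"
  shows "mom1 N p j \<le> mom2 N p j j + 1"
proof -
  have "((\<lambda>z. real (z j) * (real (z j) - 1) * p z + p z) has_sum (mom2 N p j j + 1)) (vecs N)"
    by (intro has_sum_add mh_sq[OF h] law_sum mh_law[OF h(1)])
  moreover have "real (z j) * p z \<le> real (z j) * (real (z j) - 1) * p z + p z" if "z \<in> vecs N" for z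
  proof -
    have "0 \<le> p z" using law_nonneg mh_law h that by blast
    moreover have "real (z j) \<le> real (z j) * (real (z j) - 1) + 1" by (cases "z j") (auto simp: algebra_simps)
    ultimately have "real (z j) * p z \<le> (real (z j) * (real (z j) - 1) + 1) * p z"
      by (rule mult_right_mono[rotated])
    then show ?thesis by (simp add: algebra_simps)
  qed
  ultimately show ?thesis using has_sum_mono mh_m1[OF h] by blast
qed

lemma cross_summable:
  assumes h: "moment_hyps N p Mb \<alpha>" "j < N" "l < N"
  shows "((\<lambda>z. real (z j) * real (z l) * p z) has_sum infsum (\<lambda>z. real (z j) * real (z l) * p z) (vecs N)) (vecs N)"
    and "infsum (\<lambda>z. real (z j) * real (z l) * p z) (vecs N) \<le> 2 * Mb + 1"
proof -
  let ?g = "\<lambda>z. (real (z j) * (real (z j) - 1) * p z + real (z j) * p z)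
              + (real (z l) * (real (z l) - 1) * p z + real (z l) * p z)"
  have g: "(?g has_sum ((mom2 N p j j + mom1 N p j) + (mom2 N p l l + mom1 N p l))) (vecs N)"
    by (intro has_sum_add mh_sq[OF h(1)] mh_m1[OF h(1)] h)
  have pt: "real (z j) * real (z l) * p z \<le> (1/2) * ?g z" "0 \<le> real (z j) * real (z l) * p z"
    if "z \<in> vecs N" for z
  proof -
    have p0: "0 \<le> p z" using law_nonneg mh_law h that by blast
    have "2 * (real (z j) * real (z l)) \<le> real (z j) * real (z j) + real (z l) * real (z l)"
      using sum_squares_bound[of "real (z j)" "real (z l)"] by (simp add: power2_eq_square)
    then have "2 * (real (z j) * real (z l)) * p z \<le> (real (z j) * real (z j) + real (z l) * real (z l)) * p z"
      using p0 mult_right_mono by blast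
    then show "real (z j) * real (z l) * p z \<le> (1/2) * ?g z" by (simp add: algebra_simps)
    show "0 \<le> real (z j) * real (z l) * p z" using p0 by simp
  qed
  have g2: "((\<lambda>z. (1/2) * ?g z) has_sum ((1/2) * ((mom2 N p j j + mom1 N p j) + (mom2 N p l l + mom1 N p l)))) (vecs N)"
    by (intro has_sum_cmult_right g)
  have sm: "(\<lambda>z. real (z j) * real (z l) * p z) summable_on vecs N"
    by (rule summable_on_comparison_test[OF _ pt]) (use g2 summable_on_def in blast)+
  then show "((\<lambda>z. real (z j) * real (z l) * p z) has_sum infsum (\<lambda>z. real (z j) * real (z l) * p z) (vecs N)) (vecs N)"
    by (simp add: has_sum_infsum)
  have "infsum (\<lambda>z. real (z j) * real (z l) * p z) (vecs N) \<le> (1/2) * ((mom2 N p j j + mom1 N p j) + (mom2 N p l l + mom1 N p l))"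
    using has_sum_mono[OF sm[unfolded summable_iff_has_sum_infsum] g2] pt(1) by blast
  also have "\<dots> \<le> 2 * Mb + 1"
  proof -
    have "mom2 N p j j + mom1 N p j + (mom2 N p l l + mom1 N p l) \<le> 4 * Mb + 2"
      using mom1_bound[OF h(1,2)] mom1_bound[OF h(1,3)] mh_sq_bound[OF h(1,2)] mh_sq_bound[OF h(1,3)]
      by linarith
    then show ?thesis by simp
  qed
  finally show "infsum (\<lambda>z. real (z j) * real (z l) * p z) (vecs N) \<le> 2 * Mb + 1" .
qed

lemma mom1_zero:
  assumes h: "moment_hyps N p Mb \<alpha>" "j < N" "mom1 N p j = 0" "z \<in> vecs N"
  shows "real (z j) * p z = 0"
proof -
  have 1: "infsum (\<lambda>z. real (z j) * p z) (vecs N) \<le> 0" using h(3) unfolding mom1_def by simp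
  have 2: "(\<lambda>z. real (z j) * p z) summable_on vecs N" using mh_m1[OF h(1,2)] summable_on_def by blast
  have 3: "\<And>x. x \<in> vecs N \<Longrightarrow> 0 \<le> real (x j) * p x" using law_nonneg[OF mh_law[OF h(1)]] by simp
  show ?thesis using nonneg_infsum_le_0D[OF 1 2 3 h(4)] by simp
qed

lemma cross_bound:
  assumes h: "moment_hyps N p Mb \<alpha>" "j < N" "l < N"
  shows "infsum (\<lambda>z. real (z j) * real (z l) * p z) (vecs N) \<le> ((2 * Mb + 1) / \<alpha>^2) * mom1 N p j * mom1 N p l"
proof (cases "mom1 N p j = 0 \<or> mom1 N p l = 0")
  case True
  have "infsum (\<lambda>z. real (z j) * real (z l) * p z) (vecs N) = infsum (\<lambda>z. 0) (vecs N)"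
  proof (rule infsum_cong)
    fix z assume z: "z \<in> vecs N"
    show "real (z j) * real (z l) * p z = 0"
      using True mom1_zero[OF h(1,2) _ z] mom1_zero[OF h(1,3) _ z]
      by (metis mult.assoc mult.left_commute mult_zero_right)
  qed
  then show ?thesis using True by auto
next
  case False
  have a: "\<alpha> > 0" using h(1) unfolding moment_hyps_def by auto
  have mj: "mom1 N p j \<ge> \<alpha>" "mom1 N p l \<ge> \<alpha>"
    using False mom1_nonneg[OF h(1)] h unfolding moment_hyps_def
    by (metis less_eq_real_def)+
  have Mb: "Mb > 0" using Mb_pos[OF h(1)] h(2) by simp
  have "\<alpha> * \<alpha> \<le> mom1 N p j * mom1 N p l" using mj a by (intro mult_mono) auto
  then have "((2 * Mb + 1) / \<alpha>^2) * (\<alpha> * \<alpha>) \<le> ((2 * Mb + 1) / \<alpha>^2) * (mom1 N p j * mom1 N p l)"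
    using Mb a by (intro mult_left_mono) auto
  moreover have "((2 * Mb + 1) / \<alpha>^2) * (\<alpha> * \<alpha>) = 2 * Mb + 1"
    using a by (simp add: power2_eq_square)
  ultimately show ?thesis using cross_summable(2)[OF h] by (simp add: mult.assoc)
qed

lemma pointwise_key:
  fixes Y a :: real
  assumes "0 \<le> Y" "0 \<le> a"
  shows "2 * a * Y - a^2 * (Y + Y^2) \<le> 1 - exp (- Y)"
proof -
  have e: "exp (- Y) * (1 + Y) \<le> 1"
  proof -
    have "1 + Y \<le> exp Y" by (rule exp_ge_add_one_self)
    then have "exp (- Y) * (1 + Y) \<le> exp (- Y) * exp Y" by (intro mult_left_mono) auto
    then show ?thesis by (simp add: exp_minus field_simps)
  qed
  have "exp (- Y) \<le> 1 / (1 + Y)" using e assms by (simp add: field_simps)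
  then have 1: "Y / (1 + Y) \<le> 1 - exp (- Y)" using assms by (simp add: field_simps)
  define b where "b = 1 / (1 + Y)"
  have hb: "(1 + Y) * b = 1" using assms unfolding b_def by simp
  have "Y * (1 + Y) * (b - a)^2 = Y * b * ((1 + Y) * b) - 2 * a * Y * ((1 + Y) * b) + a^2 * (Y + Y^2)"
    by (simp add: power2_eq_square algebra_simps)
  also have "\<dots> = Y / (1 + Y) - (2 * a * Y - a^2 * (Y + Y^2))" using hb unfolding b_def by simp
  finally have eq: "Y / (1 + Y) - (2 * a * Y - a^2 * (Y + Y^2)) = Y * (1 + Y) * (b - a)^2" ..
  moreover have "0 \<le> Y * (1 + Y) * (b - a)^2" using assms by simp
  ultimately show ?thesis using 1 by linarith
qed

lemma prod_exp:
  assumes "inbox N u"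
  shows "(\<Prod>j<N. (1 - u j) ^ (z j)) \<le> exp (- (\<Sum>j<N. real (z j) * u j))"
proof -
  have "(\<Prod>j<N. (1 - u j) ^ (z j)) \<le> (\<Prod>j<N. exp (- u j) ^ (z j))"
  proof (rule prod_mono)
    fix j assume "j \<in> {..<N}"
    then have "0 \<le> 1 - u j" "1 - u j \<le> exp (- u j)"
      using assms unfolding inbox_def using exp_ge_add_one_self[of "- u j"] by auto
    then show "0 \<le> (1 - u j) ^ z j \<and> (1 - u j) ^ z j \<le> exp (- u j) ^ z j"
      by (auto intro: power_mono)
  qed
  also have "\<dots> = (\<Prod>j<N. exp (- (real (z j) * u j)))"
    by (intro prod.cong refl) (simp add: exp_of_nat_mult[symmetric])
  also have "\<dots> = exp (- (\<Sum>j<N. real (z j) * u j))"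
    by (simp add: exp_sum sum_negf[symmetric])
  finally show ?thesis .
qed

lemma key_pgf:
  assumes h: "moment_hyps N p Mb \<alpha>" and u: "inbox N u" and N0: "0 < N"
  defines "y \<equiv> (\<Sum>j<N. mom1 N p j * u j)"
  defines "K \<equiv> (2 * Mb + 1) / \<alpha>^2"
  shows "y / (1 + K * y) \<le> 1 - pgf N p (\<lambda>j. 1 - u j)"
proof -
  define Y where "Y z = (\<Sum>j<N. real (z j) * u j)" for z :: "nat \<Rightarrow> nat"
  define e where "e j l = infsum (\<lambda>z. real (z j) * real (z l) * p z) (vecs N)" for j l
  have law: "offspring_law N p" using mh_law[OF h] .
  have u0: "\<And>j. j < N \<Longrightarrow> 0 \<le> u j" using u unfolding inbox_def by auto
  have sbox: "inbox N (\<lambda>j. 1 - u j)" using u unfolding inbox_def by auto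
  have y0: "0 \<le> y" unfolding y_def using u0 mom1_nonneg[OF h] by (intro sum_nonneg) auto
  have Npos: "N > 0 \<Longrightarrow> Mb > 0" using Mb_pos[OF h] by simp
  have K0: "0 \<le> K" unfolding K_def using Npos N0 by simp
  have HY: "((\<lambda>z. p z * Y z) has_sum y) (vecs N)"
  proof -
    have "((\<lambda>z. \<Sum>j<N. u j * (real (z j) * p z)) has_sum (\<Sum>j<N. u j * mom1 N p j)) (vecs N)"
      by (intro has_sum_finsum has_sum_cmult_right mh_m1[OF h]) auto
    moreover have "(\<lambda>z. \<Sum>j<N. u j * (real (z j) * p z)) = (\<lambda>z. p z * Y z)"
      unfolding Y_def by (auto simp: sum_distrib_left algebra_simps)
    moreover have "(\<Sum>j<N. u j * mom1 N p j) = y" unfolding y_def by (simp add: mult.commute)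
    ultimately show ?thesis by simp
  qed
  have HY2: "((\<lambda>z. p z * (Y z)^2) has_sum (\<Sum>j<N. \<Sum>l<N. u j * u l * e j l)) (vecs N)"
  proof -
    have "((\<lambda>z. \<Sum>j<N. \<Sum>l<N. u j * u l * (real (z j) * real (z l) * p z)) has_sum (\<Sum>j<N. \<Sum>l<N. u j * u l * e j l)) (vecs N)"
      unfolding e_def
      by (intro has_sum_finsum has_sum_cmult_right cross_summable(1)[OF h]) auto
    moreover have "(\<lambda>z. \<Sum>j<N. \<Sum>l<N. u j * u l * (real (z j) * real (z l) * p z)) = (\<lambda>z. p z * (Y z)^2)"
    proof
      fix z
      have "(Y z)^2 = (\<Sum>j<N. \<Sum>l<N. (real (z j) * u j) * (real (z l) * u l))"
        unfolding Y_def power2_eq_square by (simp add: sum_product)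
      then show "(\<Sum>j<N. \<Sum>l<N. u j * u l * (real (z j) * real (z l) * p z)) = p z * (Y z)^2"
        by (simp add: sum_distrib_left algebra_simps)
    qed
    ultimately show ?thesis by simp
  qed
  have E2: "(\<Sum>j<N. \<Sum>l<N. u j * u l * e j l) \<le> K * y^2"
  proof -
    have "(\<Sum>j<N. \<Sum>l<N. u j * u l * e j l) \<le> (\<Sum>j<N. \<Sum>l<N. u j * u l * (K * mom1 N p j * mom1 N p l))"
      unfolding e_def K_def
      by (intro sum_mono mult_left_mono cross_bound[OF h]) (auto simp: u0)
    also have "\<dots> = K * y^2"
      unfolding y_def power2_eq_square by (simp add: sum_product sum_distrib_left algebra_simps)
    finally show ?thesis .
  qed
  define a where "a = 1 / (1 + K * y)"
  have a0: "0 \<le> a" unfolding a_def using K0 y0 by simp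
  have Y0: "\<And>z. 0 \<le> Y z" unfolding Y_def using u0 by (intro sum_nonneg) auto
  have L: "((\<lambda>z. 2 * a * (p z * Y z) - a^2 * (p z * Y z) - a^2 * (p z * (Y z)^2)) has_sum
           (2 * a * y - a^2 * y - a^2 * (\<Sum>j<N. \<Sum>l<N. u j * u l * e j l))) (vecs N)"
    by (intro has_sum_diff_real has_sum_cmult_right HY HY2)
  have pt: "2 * a * (p z * Y z) - a^2 * (p z * Y z) - a^2 * (p z * (Y z)^2)
             \<le> p z * (1 - (\<Prod>j<N. (1 - u j) ^ z j))" if z: "z \<in> vecs N" for z
  proof -
    have p0: "0 \<le> p z" using law_nonneg[OF law z] .
    have "2 * a * Y z - a^2 * (Y z + (Y z)^2) \<le> 1 - exp (- Y z)" by (rule pointwise_key[OF Y0 a0])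
    also have "\<dots> \<le> 1 - (\<Prod>j<N. (1 - u j) ^ z j)" using prod_exp[OF u, of z] unfolding Y_def by simp
    finally have "p z * (2 * a * Y z - a^2 * (Y z + (Y z)^2)) \<le> p z * (1 - (\<Prod>j<N. (1 - u j) ^ z j))"
      using p0 by (simp add: mult_left_mono)
    then show ?thesis by (simp add: algebra_simps)
  qed
  have main: "2 * a * y - a^2 * y - a^2 * (\<Sum>j<N. \<Sum>l<N. u j * u l * e j l) \<le> 1 - pgf N p (\<lambda>j. 1 - u j)"
    using has_sum_mono[OF L pgf_zero_ones[OF law sbox]] pt by simp
  have "2 * a * y - a^2 * y - a^2 * (K * y^2) \<le> 2 * a * y - a^2 * y - a^2 * (\<Sum>j<N. \<Sum>l<N. u j * u l * e j l)"
    using E2 by (simp add: mult_left_mono)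
  moreover have "2 * a * y - a^2 * y - a^2 * (K * y^2) = y / (1 + K * y)"
  proof -
    have d: "1 + K * y > 0" using K0 y0 by (smt (verit) mult_nonneg_nonneg)
    have ad: "a * (1 + K * y) = 1" unfolding a_def using d by simp
    have "2 * a * y - a^2 * y - a^2 * (K * y^2) = a * y * (2 - a * (1 + K * y))"
      by (simp add: power2_eq_square algebra_simps)
    also have "\<dots> = a * y" using ad by simp
    finally show ?thesis unfolding a_def by simp
  qed
  ultimately show ?thesis using main by linarith
qed

section \<open>Iteration\<close>

lemma Mprod_nonneg:
  assumes "\<And>\<theta> i k. i < N \<Longrightarrow> k < N \<Longrightarrow> 0 \<le> M \<theta> i k" "i < N" "k < N"
  shows "0 \<le> Mprod N M ws i k"
  using assms(2,3) by (induction ws arbitrary: i k) (auto simp: mat_id_def mat_mult_def assms(1) intro!: sum_nonneg)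

definition rs :: "nat \<Rightarrow> (nat \<Rightarrow> nat \<Rightarrow> real) \<Rightarrow> nat \<Rightarrow> real" where
  "rs N A i = (\<Sum>k<N. A i k)"

lemma rs_nil: "i < N \<Longrightarrow> rs N (Mprod N M []) i = 1"
  unfolding rs_def by (simp add: mat_id_def)

lemma rs_cons: "rs N (Mprod N M (\<theta> # ws)) i = (\<Sum>j<N. M \<theta> i j * rs N (Mprod N M ws) j)"
  unfolding rs_def by (simp add: mat_mult_def sum_distrib_left) (rule sum.swap)

lemma mat_sum_rs: "mat_sum N A = (\<Sum>i<N. rs N A i)"
  unfolding mat_sum_def rs_def ..

lemma rs_le_mat_sum:
  assumes "\<And>i k. i < N \<Longrightarrow> k < N \<Longrightarrow> 0 \<le> A i k" "i < N"
  shows "rs N A i \<le> mat_sum N A"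
  unfolding mat_sum_rs using assms
  by (intro member_le_sum) (auto simp: rs_def intro!: sum_nonneg)

lemma comp_box:
  assumes laws: "\<forall>\<theta> i. i < N \<longrightarrow> offspring_law N (f \<theta> i)" and s: "inbox N s"
  shows "inbox N (pgf_comp N f ws s)"
proof (induction ws)
  case Nil then show ?case using s by simp
next
  case (Cons \<theta> ws)
  then show ?case using laws pgf_nonneg pgf_le1
    unfolding inbox_def by (simp add: pgf_vec_def)
qed

fun cc :: "nat \<Rightarrow> real \<Rightarrow> ('i \<Rightarrow> nat \<Rightarrow> nat \<Rightarrow> real) \<Rightarrow> 'i list \<Rightarrow> real" where
  "cc N K M [] = 1"
| "cc N K M (\<theta> # ws) = cc N K M ws + K * mat_sum N (Mprod N M (\<theta> # ws))"

lemma mean_mom1: "mean_matrix N f \<theta> i j = mom1 N (f \<theta> i) j"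
  unfolding mean_matrix_def mom1_def ..

lemma cc_ge1:
  assumes "0 \<le> K" "\<And>\<theta> i k. i < N \<Longrightarrow> k < N \<Longrightarrow> 0 \<le> M \<theta> i k"
  shows "1 \<le> cc N K M ws"
proof (induction ws)
  case (Cons \<theta> ws)
  have "0 \<le> mat_sum N (Mprod N M (\<theta> # ws))"
    unfolding mat_sum_def by (intro sum_nonneg Mprod_nonneg assms(2)) auto
  then have "0 \<le> K * mat_sum N (Mprod N M (\<theta> # ws))" using assms(1) by simp
  then show ?case using Cons by simp
qed simp

lemma mean_nonneg:
  assumes laws: "\<forall>\<theta> i. i < N \<longrightarrow> offspring_law N (f \<theta> i)" and "i < N"
  shows "0 \<le> mean_matrix N f \<theta> i k"
proof -
  have "offspring_law N (f \<theta> i)" using assms by blast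
  then show ?thesis unfolding mean_matrix_def by (intro infsum_nonneg) (simp add: law_nonneg)
qed

lemma iteration:
  assumes mh: "\<And>\<theta> i. i < N \<Longrightarrow> moment_hyps N (f \<theta> i) Mb \<alpha>" and N0: "0 < N"
  defines "K \<equiv> (2 * Mb + 1) / \<alpha>^2"
  shows "\<forall>i<N. rs N (Mprod N (mean_matrix N f) ws) i / cc N K (mean_matrix N f) ws
                \<le> 1 - pgf_comp N f ws (\<lambda>_. 0) i"
proof (induction ws)
  case Nil
  then show ?case using rs_nil by simp
next
  case (Cons \<theta> ws)
  let ?M = "mean_matrix N f"
  let ?P = "Mprod N ?M ws"
  let ?P' = "Mprod N ?M (\<theta> # ws)"
  let ?c = "cc N K ?M ws"
  define u where "u j = 1 - pgf_comp N f ws (\<lambda>_. 0) j" for j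
  have laws: "\<forall>\<theta> i. i < N \<longrightarrow> offspring_law N (f \<theta> i)" using mh mh_law by blast
  have Mnn: "\<And>\<theta> i k. i < N \<Longrightarrow> k < N \<Longrightarrow> 0 \<le> ?M \<theta> i k"
    using mean_nonneg[OF laws] by blast
  have Mb0: "0 < Mb" using Mb_pos[OF mh[OF N0] N0] .
  have K0: "0 \<le> K" unfolding K_def using Mb0 by simp
  have c1: "1 \<le> ?c" by (rule cc_ge1[OF K0 Mnn])
  have box: "inbox N (pgf_comp N f ws (\<lambda>_. 0))" by (rule comp_box[OF laws]) (simp add: inbox_def)
  have ubox: "inbox N u" using box unfolding inbox_def u_def by auto
  have eq: "pgf_comp N f ws (\<lambda>_. 0) = (\<lambda>j. 1 - u j)" unfolding u_def by simp
  have IH: "\<And>j. j < N \<Longrightarrow> rs N ?P j / ?c \<le> u j" using Cons unfolding u_def by simp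
  show ?case
  proof (intro allI impI)
    fix i assume i: "i < N"
    define y where "y = (\<Sum>j<N. mom1 N (f \<theta> i) j * u j)"
    define y0 where "y0 = rs N ?P' i / ?c"
    have key: "y / (1 + K * y) \<le> 1 - pgf N (f \<theta> i) (\<lambda>j. 1 - u j)"
      unfolding y_def K_def by (rule key_pgf[OF mh[OF i] ubox N0])
    have "y0 = (\<Sum>j<N. ?M \<theta> i j * (rs N ?P j / ?c))"
      unfolding y0_def rs_cons by (simp add: sum_divide_distrib)
    also have "\<dots> \<le> (\<Sum>j<N. ?M \<theta> i j * u j)"
      using IH Mnn i by (intro sum_mono mult_left_mono) auto
    also have "\<dots> = y" unfolding y_def by (simp add: mean_mom1)
    finally have yy: "y0 \<le> y" .
    have rs0: "0 \<le> rs N ?P' i" unfolding rs_def using i by (intro sum_nonneg Mprod_nonneg Mnn) auto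
    have y00: "0 \<le> y0" unfolding y0_def using rs0 c1 by simp
    have d0: "0 < 1 + K * y0" using K0 y00 by (simp add: add_pos_nonneg)
    have d: "0 < 1 + K * y" using K0 y00 yy by (simp add: add_pos_nonneg)
    have mono: "y0 / (1 + K * y0) \<le> y / (1 + K * y)"
    proof -
      have "y0 * (1 + K * y) \<le> y * (1 + K * y0)" using yy K0 y00
        by (simp add: algebra_simps)
      then show ?thesis using d0 d by (simp add: divide_simps)
    qed
    have c0: "0 < ?c" using c1 by simp
    have "y0 / (1 + K * y0) = rs N ?P' i / (?c + K * rs N ?P' i)"
      unfolding y0_def using c0 by (simp add: field_simps)
    moreover have "rs N ?P' i / (?c + K * mat_sum N ?P') \<le> rs N ?P' i / (?c + K * rs N ?P' i)"
    proof (rule divide_left_mono)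
      have "rs N ?P' i \<le> mat_sum N ?P'" by (rule rs_le_mat_sum[OF Mprod_nonneg[OF Mnn] i])
      then show "?c + K * rs N ?P' i \<le> ?c + K * mat_sum N ?P'" using K0 by (simp add: mult_left_mono)
      show "0 \<le> rs N ?P' i" by (rule rs0)
      have "0 < ?c + K * rs N ?P' i" using c0 K0 rs0 by (simp add: add_pos_nonneg)
      moreover have "0 < ?c + K * mat_sum N ?P'" using c0 K0 rs0 \<open>rs N ?P' i \<le> mat_sum N ?P'\<close>
        by (smt (verit) mult_nonneg_nonneg)
      ultimately show "0 < (?c + K * mat_sum N ?P') * (?c + K * rs N ?P' i)" by simp
    qed
    ultimately have "rs N ?P' i / cc N K ?M (\<theta> # ws) \<le> y / (1 + K * y)"
      using mono by simp
    also have "\<dots> \<le> 1 - pgf_comp N f (\<theta> # ws) (\<lambda>_. 0) i"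
      using key i by (simp add: pgf_vec_def eq)
    finally show "rs N ?P' i / cc N K ?M (\<theta> # ws) \<le> 1 - pgf_comp N f (\<theta> # ws) (\<lambda>_. 0) i" .
  qed
qed

section \<open>Matrix products\<close>

locale mats =
  fixes N :: nat and M :: "'i \<Rightarrow> nat \<Rightarrow> nat \<Rightarrow> real" and a Cb :: real
  assumes Mnn: "\<And>\<theta> i k. i < N \<Longrightarrow> k < N \<Longrightarrow> 0 \<le> M \<theta> i k"
    and Mub: "\<And>\<theta> i k. i < N \<Longrightarrow> k < N \<Longrightarrow> M \<theta> i k \<le> Cb"
    and col: "\<And>\<theta> k. k < N \<Longrightarrow> \<exists>i<N. a \<le> M \<theta> i k"
    and row: "\<And>\<theta> i. i < N \<Longrightarrow> \<exists>k<N. 0 < M \<theta> i k"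
    and a0: "0 < a"
begin

abbreviation P where "P ws \<equiv> Mprod N M ws"
abbreviation ms where "ms A \<equiv> mat_sum N A"

lemma Pnn: "i < N \<Longrightarrow> k < N \<Longrightarrow> 0 \<le> P ws i k"
  by (rule Mprod_nonneg[OF Mnn])

lemma rs_nn: "i < N \<Longrightarrow> 0 \<le> rs N (P ws) i"
  unfolding rs_def by (intro sum_nonneg Pnn) auto

lemma ms_nn: "0 \<le> ms (P ws)"
  unfolding mat_sum_rs by (intro sum_nonneg rs_nn) auto

lemma ms_cons: "ms (P (\<theta> # ws)) = (\<Sum>j<N. (\<Sum>i<N. M \<theta> i j) * rs N (P ws) j)"
proof -
  have "ms (P (\<theta> # ws)) = (\<Sum>i<N. \<Sum>j<N. M \<theta> i j * rs N (P ws) j)"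
    unfolding mat_sum_rs rs_cons ..
  also have "\<dots> = (\<Sum>j<N. \<Sum>i<N. M \<theta> i j * rs N (P ws) j)" by (rule sum.swap)
  also have "\<dots> = (\<Sum>j<N. (\<Sum>i<N. M \<theta> i j) * rs N (P ws) j)" by (simp add: sum_distrib_right)
  finally show ?thesis .
qed

lemma ms_cons_ge: "a * ms (P ws) \<le> ms (P (\<theta> # ws))"
proof -
  have "a * ms (P ws) = (\<Sum>j<N. a * rs N (P ws) j)" unfolding mat_sum_rs by (simp add: sum_distrib_left)
  also have "\<dots> \<le> (\<Sum>j<N. (\<Sum>i<N. M \<theta> i j) * rs N (P ws) j)"
  proof (intro sum_mono mult_right_mono rs_nn)
    fix j assume j: "j \<in> {..<N}"
    then obtain i where i: "i < N" "a \<le> M \<theta> i j" using col by auto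
    have "M \<theta> i j \<le> (\<Sum>i<N. M \<theta> i j)" using i j Mnn by (intro member_le_sum) auto
    then show "a \<le> (\<Sum>i<N. M \<theta> i j)" using i by linarith
  qed auto
  finally show ?thesis unfolding ms_cons .
qed

lemma ms_cons_le: "ms (P (\<theta> # ws)) \<le> (real N * Cb) * ms (P ws)"
proof -
  have "(\<Sum>j<N. (\<Sum>i<N. M \<theta> i j) * rs N (P ws) j) \<le> (\<Sum>j<N. (real N * Cb) * rs N (P ws) j)"
  proof (intro sum_mono mult_right_mono rs_nn)
    fix j assume j: "j \<in> {..<N}"
    have "(\<Sum>i<N. M \<theta> i j) \<le> (\<Sum>i<N. Cb)" using j Mub by (intro sum_mono) auto
    then show "(\<Sum>i<N. M \<theta> i j) \<le> real N * Cb" by simp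
  qed auto
  also have "\<dots> = (real N * Cb) * ms (P ws)" unfolding mat_sum_rs by (simp add: sum_distrib_left)
  finally show ?thesis unfolding ms_cons .
qed

lemma ms_app_ge: "a ^ length xs * ms (P ys) \<le> ms (P (xs @ ys))"
proof (induction xs)
  case (Cons \<theta> xs)
  have "a ^ length (\<theta> # xs) * ms (P ys) = a * (a ^ length xs * ms (P ys))" by simp
  also have "\<dots> \<le> a * ms (P (xs @ ys))" using Cons a0 by (simp add: mult_left_mono)
  also have "\<dots> \<le> ms (P ((\<theta> # xs) @ ys))" using ms_cons_ge by simp
  finally show ?case .
qed simp

lemma NCb_nn: "0 < N \<Longrightarrow> 0 \<le> Cb"
proof -
  assume "0 < N"
  then show ?thesis using Mnn[of 0 0 undefined] Mub[of 0 0 undefined] by linarith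
qed

lemma ms_app_le: "0 < N \<Longrightarrow> ms (P (xs @ ys)) \<le> (real N * Cb) ^ length xs * ms (P ys)"
proof (induction xs)
  case (Cons \<theta> xs)
  have "ms (P ((\<theta> # xs) @ ys)) \<le> (real N * Cb) * ms (P (xs @ ys))" using ms_cons_le by simp
  also have "\<dots> \<le> (real N * Cb) * ((real N * Cb) ^ length xs * ms (P ys))"
    using Cons NCb_nn by (intro mult_left_mono) auto
  finally show ?case by simp
qed simp

lemma Mprod_append: "i < N \<Longrightarrow> P (xs @ ys) i k = (\<Sum>j<N. P xs i j * P ys j k)"
proof (induction xs arbitrary: i)
  case Nil
  have "(\<Sum>j<N. mat_id i j * P ys j k) = (\<Sum>j<N. if j = i then P ys j k else 0)"
    by (intro sum.cong) (auto simp: mat_id_def)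
  then show ?case using Nil by simp
next
  case (Cons \<theta> xs)
  have "P ((\<theta> # xs) @ ys) i k = (\<Sum>j<N. M \<theta> i j * (\<Sum>l<N. P xs j l * P ys l k))"
    using Cons by (simp add: mat_mult_def)
  also have "\<dots> = (\<Sum>j<N. \<Sum>l<N. M \<theta> i j * P xs j l * P ys l k)"
    by (simp add: sum_distrib_left mult.assoc)
  also have "\<dots> = (\<Sum>l<N. \<Sum>j<N. M \<theta> i j * P xs j l * P ys l k)" by (rule sum.swap)
  also have "\<dots> = (\<Sum>l<N. P (\<theta> # xs) i l * P ys l k)"
    by (simp add: mat_mult_def sum_distrib_right)
  finally show ?case .
qed

lemma rs_append: "i < N \<Longrightarrow> rs N (P (xs @ ys)) i = (\<Sum>j<N. P xs i j * rs N (P ys) j)"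
proof -
  assume i: "i < N"
  have "rs N (P (xs @ ys)) i = (\<Sum>k<N. \<Sum>j<N. P xs i j * P ys j k)"
    unfolding rs_def using Mprod_append[OF i] by simp
  also have "\<dots> = (\<Sum>j<N. \<Sum>k<N. P xs i j * P ys j k)" by (rule sum.swap)
  also have "\<dots> = (\<Sum>j<N. P xs i j * rs N (P ys) j)" unfolding rs_def by (simp add: sum_distrib_left)
  finally show ?thesis .
qed

lemma rs_pos: "i < N \<Longrightarrow> 0 < rs N (P ws) i"
proof (induction ws arbitrary: i)
  case Nil then show ?case using rs_nil by simp
next
  case (Cons \<theta> ws)
  obtain k where k: "k < N" "0 < M \<theta> i k" using row Cons.prems by blast
  have "M \<theta> i k * rs N (P ws) k \<le> (\<Sum>j<N. M \<theta> i j * rs N (P ws) j)"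
    using k Cons.prems Mnn rs_nn by (intro member_le_sum mult_nonneg_nonneg) auto
  moreover have "0 < M \<theta> i k * rs N (P ws) k" using k Cons.IH by simp
  ultimately show ?case unfolding rs_cons by linarith
qed

lemma block_rs:
  assumes \<beta>: "\<And>i j. i < N \<Longrightarrow> j < N \<Longrightarrow> \<beta> \<le> P w i j" "0 \<le> \<beta>" and i: "i < N"
  shows "\<beta> * rs N (P xs) i * ms (P ys) \<le> rs N (P (xs @ w @ ys)) i"
proof -
  have wy: "\<beta> * ms (P ys) \<le> rs N (P (w @ ys)) j" if j: "j < N" for j
  proof -
    have "\<beta> * ms (P ys) = (\<Sum>l<N. \<beta> * rs N (P ys) l)" unfolding mat_sum_rs by (simp add: sum_distrib_left)
    also have "\<dots> \<le> (\<Sum>l<N. P w j l * rs N (P ys) l)"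
      using \<beta> j rs_nn by (intro sum_mono mult_right_mono) auto
    also have "\<dots> = rs N (P (w @ ys)) j" using rs_append[OF j] by simp
    finally show ?thesis .
  qed
  have "\<beta> * rs N (P xs) i * ms (P ys) = (\<Sum>j<N. P xs i j * (\<beta> * ms (P ys)))"
    unfolding rs_def by (simp add: sum_distrib_left sum_distrib_right algebra_simps)
  also have "\<dots> \<le> (\<Sum>j<N. P xs i j * rs N (P (w @ ys)) j)"
    using wy i Pnn by (intro sum_mono mult_left_mono) auto
  also have "\<dots> = rs N (P (xs @ w @ ys)) i" using rs_append[OF i, of xs "w @ ys"] by simp
  finally show ?thesis .
qed

lemma block_ms:
  assumes \<beta>: "\<And>i j. i < N \<Longrightarrow> j < N \<Longrightarrow> \<beta> \<le> P w i j" "0 \<le> \<beta>"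
  shows "\<beta> * ms (P xs) * ms (P ys) \<le> ms (P (xs @ w @ ys))"
proof -
  have "\<beta> * ms (P xs) * ms (P ys) = (\<Sum>i<N. \<beta> * rs N (P xs) i * ms (P ys))"
    unfolding mat_sum_rs[of N "P xs"] by (simp add: sum_distrib_left sum_distrib_right)
  also have "\<dots> \<le> (\<Sum>i<N. rs N (P (xs @ w @ ys)) i)"
    by (intro sum_mono block_rs[OF \<beta>]) auto
  finally show ?thesis unfolding mat_sum_rs .
qed

end


section \<open>Ergodic part\<close>

lemma shift_pow: "(shift ^^ n) \<omega> = (\<lambda>k. \<omega> (k + n))"
  by (induction n arbitrary: \<omega>) (auto simp: shift_def funpow_Suc_right)

definition occ :: "'i list \<Rightarrow> (nat \<Rightarrow> 'i) \<Rightarrow> nat \<Rightarrow> bool" where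
  "occ w \<omega> t \<longleftrightarrow> (\<forall>j<length w. \<omega> (t + j) = w ! j)"

definition C0 :: "'i list \<Rightarrow> (nat \<Rightarrow> 'i) set" where
  "C0 w = {\<omega>. \<forall>j<length w. \<omega> j = w ! j}"

lemma occ_shift: "occ w \<omega> t \<longleftrightarrow> (shift ^^ t) \<omega> \<in> C0 w"
  unfolding occ_def C0_def shift_pow by (simp add: add.commute)

lemma occ_shift1: "occ w (shift \<omega>) t \<longleftrightarrow> occ w \<omega> (Suc t)"
  unfolding occ_def shift_def by simp

locale erg =
  fixes \<nu> :: "(nat \<Rightarrow> 'i::countable) measure"
  assumes erg: "ergodic_shift_measure \<nu>"
begin

lemma ps: "prob_space \<nu>" using erg unfolding ergodic_shift_measure_def by blast

lemma sets_eq: "sets \<nu> = sets (PiM UNIV (\<lambda>_::nat. count_space (UNIV :: 'i set)))"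
  using erg unfolding ergodic_shift_measure_def by blast

lemma space_eq: "space \<nu> = UNIV"
  using sets_eq_imp_space_eq[OF sets_eq] by (simp add: space_PiM)

lemma shift_meas: "shift \<in> measurable \<nu> \<nu>"
  using erg unfolding ergodic_shift_measure_def by blast

lemma inv: "A \<in> sets \<nu> \<Longrightarrow> emeasure \<nu> (shift -` A) = emeasure \<nu> A"
  using erg space_eq unfolding ergodic_shift_measure_def by auto

lemma ergodic: "A \<in> sets \<nu> \<Longrightarrow> shift -` A = A \<Longrightarrow> emeasure \<nu> A = 0 \<or> emeasure \<nu> A = 1"
  using erg space_eq unfolding ergodic_shift_measure_def by auto

lemma pre_sets: "A \<in> sets \<nu> \<Longrightarrow> shift -` A \<in> sets \<nu>"
  using measurable_sets[OF shift_meas] space_eq by fastforce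

lemma pow_sets: "A \<in> sets \<nu> \<Longrightarrow> (shift ^^ n) -` A \<in> sets \<nu>"
proof (induction n arbitrary: A)
  case (Suc n)
  have eq: "(shift ^^ Suc n) -` A = (shift ^^ n) -` (shift -` A)"
    by (simp only: funpow.simps(2) vimage_comp)
  show ?case unfolding eq by (rule Suc.IH[OF pre_sets[OF Suc.prems]])
qed simp

lemma pow_inv: "A \<in> sets \<nu> \<Longrightarrow> emeasure \<nu> ((shift ^^ n) -` A) = emeasure \<nu> A"
proof (induction n arbitrary: A)
  case (Suc n)
  have eq: "(shift ^^ Suc n) -` A = (shift ^^ n) -` (shift -` A)"
    by (simp only: funpow.simps(2) vimage_comp)
  show ?case unfolding eq using Suc.IH[OF pre_sets[OF Suc.prems]] inv[OF Suc.prems] by simp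
qed simp

lemma UNIV_sets: "UNIV \<in> sets \<nu>"
  using sets.top[of \<nu>] space_eq by simp

lemma INT_sets: "countable I \<Longrightarrow> (\<And>i. i \<in> I \<Longrightarrow> F i \<in> sets \<nu>) \<Longrightarrow> (\<Inter>i\<in>I. F i) \<in> sets \<nu>"
  by (rule sets.countable_INT''[OF UNIV_sets])

lemma UN_sets: "countable I \<Longrightarrow> (\<And>i. i \<in> I \<Longrightarrow> F i \<in> sets \<nu>) \<Longrightarrow> (\<Union>i\<in>I. F i) \<in> sets \<nu>"
  by (intro sets.countable_UN'') auto

lemma compl_sets: "A \<in> sets \<nu> \<Longrightarrow> UNIV - A \<in> sets \<nu>"
  using sets.compl_sets[of A \<nu>] space_eq by simp

lemma pow_inv_measure: "A \<in> sets \<nu> \<Longrightarrow> measure \<nu> ((shift ^^ n) -` A) = measure \<nu> A"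
  using pow_inv by (simp add: measure_def)

lemma coord_sets: "{\<omega>. \<omega> j = x} \<in> sets \<nu>"
proof -
  have "{\<omega> :: nat \<Rightarrow> 'i. \<omega> j = x} \<in> sets (PiM UNIV (\<lambda>_::nat. count_space (UNIV :: 'i set)))"
  proof -
    have "(\<lambda>\<omega>::nat \<Rightarrow> 'i. \<omega> j) -` {x} \<inter> space (PiM UNIV (\<lambda>_::nat. count_space (UNIV :: 'i set))) \<in> sets (PiM UNIV (\<lambda>_::nat. count_space (UNIV :: 'i set)))"
      by (rule measurable_sets[OF measurable_component_singleton]) auto
    then show ?thesis by (simp add: space_PiM vimage_def)
  qed
  then show ?thesis using sets_eq by simp
qed

lemma C0_sets: "C0 w \<in> sets \<nu>"
proof -
  have "C0 w = (\<Inter>j\<in>{..<length w}. {\<omega>. \<omega> j = w ! j})" unfolding C0_def by auto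
  also have "\<dots> \<in> sets \<nu>"
    using coord_sets by (intro INT_sets) auto
  finally show ?thesis .
qed


lemma occ_pow: "occ w ((shift ^^ n) \<omega>) t \<longleftrightarrow> occ w \<omega> (t + n)"
  unfolding occ_def shift_pow by (simp add: algebra_simps)

lemma occ_sets: "{\<omega>. occ w \<omega> t} \<in> sets \<nu>"
proof -
  have "{\<omega>. occ w \<omega> t} = (shift ^^ t) -` C0 w" using occ_shift by blast
  then show ?thesis using pow_sets[OF C0_sets] by simp
qed

definition Bset :: "'i list \<Rightarrow> nat \<Rightarrow> (nat \<Rightarrow> 'i) set" where
  "Bset w g = {\<omega>. \<forall>t<g. \<not> occ w \<omega> t}"

lemma Bset_sets: "Bset w g \<in> sets \<nu>"
proof -
  have "Bset w g = (\<Inter>t\<in>{..<g}. UNIV - {\<omega>. occ w \<omega> t})" unfolding Bset_def by auto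
  then show ?thesis using occ_sets compl_sets UNIV_sets by (auto intro!: INT_sets)
qed

lemma Bset_Suc: "Bset w (Suc g) = (UNIV - C0 w) \<inter> shift -` Bset w g"
proof -
  have "occ w \<omega> 0 \<longleftrightarrow> \<omega> \<in> C0 w" for \<omega> using occ_shift[of w \<omega> 0] by simp
  then show ?thesis unfolding Bset_def
  proof (intro set_eqI iffI)
    fix \<omega> assume a: "\<omega> \<in> {\<omega>. \<forall>t<Suc g. \<not> occ w \<omega> t}"
    have "\<omega> \<notin> C0 w" using a occ_shift[of w \<omega> 0] by auto
    moreover have "\<forall>t<g. \<not> occ w (shift \<omega>) t" using a by (auto simp: occ_shift1)
    ultimately show "\<omega> \<in> (UNIV - C0 w) \<inter> shift -` {\<omega>. \<forall>t<g. \<not> occ w \<omega> t}" by simp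
  next
    fix \<omega> assume a: "\<omega> \<in> (UNIV - C0 w) \<inter> shift -` {\<omega>. \<forall>t<g. \<not> occ w \<omega> t}"
    show "\<omega> \<in> {\<omega>. \<forall>t<Suc g. \<not> occ w \<omega> t}"
    proof (intro CollectI allI impI)
      fix t assume t: "t < Suc g"
      show "\<not> occ w \<omega> t"
      proof (cases t)
        case 0 then show ?thesis using a occ_shift[of w \<omega> 0] by auto
      next
        case (Suc t') then show ?thesis using a t occ_shift1[of w \<omega> t'] by auto
      qed
    qed
  qed
qed

definition pk :: "'i list \<Rightarrow> nat \<Rightarrow> real" where
  "pk w g = measure \<nu> (C0 w \<inter> shift -` Bset w g)"

lemma pk_nonneg: "0 \<le> pk w g" unfolding pk_def by simp

lemma fin: "emeasure \<nu> A \<noteq> \<infinity>"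
proof -
  interpret prob_space \<nu> by (rule ps)
  show ?thesis using emeasure_finite[of A] by simp
qed

lemma Bset_step: "measure \<nu> (Bset w g) = measure \<nu> (Bset w (Suc g)) + pk w g"
proof -
  have s1: "shift -` Bset w g \<in> sets \<nu>" by (rule pre_sets[OF Bset_sets])
  have "measure \<nu> (Bset w g) = measure \<nu> (shift -` Bset w g)"
    using inv[OF Bset_sets] by (simp add: measure_def)
  also have "shift -` Bset w g = ((UNIV - C0 w) \<inter> shift -` Bset w g) \<union> (C0 w \<inter> shift -` Bset w g)" by auto
  also have "measure \<nu> \<dots> = measure \<nu> ((UNIV - C0 w) \<inter> shift -` Bset w g) + measure \<nu> (C0 w \<inter> shift -` Bset w g)"
    using s1 C0_sets compl_sets[OF C0_sets] fin by (intro measure_Union) auto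
  finally show ?thesis unfolding pk_def Bset_Suc .
qed

lemma pk_sum: "(\<Sum>g<G. pk w g) \<le> 1"
proof -
  have "(\<Sum>g<G. pk w g) = measure \<nu> (Bset w 0) - measure \<nu> (Bset w G)"
  proof (induction G)
    case (Suc G)
    have "(\<Sum>g<Suc G. pk w g) = (\<Sum>g<G. pk w g) + pk w G" by simp
    also have "\<dots> = measure \<nu> (Bset w 0) - measure \<nu> (Bset w G) + pk w G" using Suc by simp
    also have "\<dots> = measure \<nu> (Bset w 0) - measure \<nu> (Bset w (Suc G))"
      using Bset_step[of w G] by linarith
    finally show ?case .
  qed simp
  also have "\<dots> \<le> 1"
    using prob_space.prob_le_1[OF ps, of "Bset w 0"] measure_nonneg[of \<nu> "Bset w G"] by linarith
  finally show ?thesis .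
qed

lemma pk_group_sum:
  assumes "0 < Kd"
  shows "(\<Sum>n<m. pk w (n div Kd)) \<le> real Kd"
proof -
  have "(\<Sum>n<m. pk w (n div Kd)) \<le> (\<Sum>n<m * Kd. pk w (n div Kd))"
    using assms pk_nonneg by (intro sum_mono2) auto
  also have "\<dots> = (\<Sum>g<m. \<Sum>n\<in>{g * Kd..<g * Kd + Kd}. pk w (n div Kd))"
    by (rule sum.nat_group[symmetric])
  also have "\<dots> = (\<Sum>g<m. real Kd * pk w g)"
  proof (intro sum.cong refl)
    fix g
    have "\<And>n. n \<in> {g * Kd..<g * Kd + Kd} \<Longrightarrow> n div Kd = g"
      using assms by (auto simp: div_nat_eqI mult.commute)
    then show "(\<Sum>n\<in>{g * Kd..<g * Kd + Kd}. pk w (n div Kd)) = real Kd * pk w g" by simp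
  qed
  also have "\<dots> = real Kd * (\<Sum>g<m. pk w g)" by (simp add: sum_distrib_left)
  also have "\<dots> \<le> real Kd" using pk_sum[of w m] by (simp add: mult_left_le)
  finally show ?thesis .
qed

lemma gap_AE:
  assumes "0 < Kd"
  shows "AE \<omega> in \<nu>. \<exists>n0. \<forall>n\<ge>n0. occ w \<omega> n \<longrightarrow> (\<exists>t. n < t \<and> t \<le> n + n div Kd \<and> occ w \<omega> t)"
proof -
  define E where "E n = (shift ^^ n) -` (C0 w \<inter> shift -` Bset w (n div Kd))" for n
  have Es: "E n \<in> sets \<nu>" for n
    unfolding E_def by (intro pow_sets sets.Int C0_sets pre_sets Bset_sets)
  have Em: "measure \<nu> (E n) = pk w (n div Kd)" for n
    unfolding E_def pk_def by (rule pow_inv_measure) (intro sets.Int C0_sets pre_sets Bset_sets)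
  have "summable (\<lambda>n. measure \<nu> (E n))"
    unfolding Em using pk_group_sum[OF assms] pk_nonneg by (intro summableI_nonneg_bounded) auto
  then have "AE x in \<nu>. eventually (\<lambda>n. x \<in> space \<nu> - E n) sequentially"
    using Es fin by (intro borel_cantelli_AE1) (auto simp: less_top)
  moreover have pw: "\<exists>n0. \<forall>n\<ge>n0. occ w \<omega> n \<longrightarrow> (\<exists>t. n < t \<and> t \<le> n + n div Kd \<and> occ w \<omega> t)"
    if ev: "eventually (\<lambda>n. \<omega> \<in> space \<nu> - E n) sequentially" for \<omega>
  proof -
    obtain n0 where n0: "\<And>n. n \<ge> n0 \<Longrightarrow> \<omega> \<notin> E n" using ev unfolding eventually_sequentially by blast
    have "occ w \<omega> n \<longrightarrow> (\<exists>t. n < t \<and> t \<le> n + n div Kd \<and> occ w \<omega> t)" if nn: "n0 \<le> n" for n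
    proof
      assume o: "occ w \<omega> n"
      have "\<omega> \<notin> E n" using n0 nn by blast
      then have "\<not> (\<forall>t<n div Kd. \<not> occ w \<omega> (Suc (t + n)))"
        using o unfolding E_def Bset_def
        by (auto simp: occ_shift[symmetric] occ_shift1 occ_pow)
      then obtain t where t: "t < n div Kd" "occ w \<omega> (Suc (t + n))" by blast
      have "n < Suc (t + n) \<and> Suc (t + n) \<le> n + n div Kd \<and> occ w \<omega> (Suc (t + n))"
        using t by auto
      then show "\<exists>t. n < t \<and> t \<le> n + n div Kd \<and> occ w \<omega> t" by blast
    qed
    then show ?thesis by blast
  qed
  ultimately show ?thesis by (auto elim: AE_mp)
qed

lemma infinite_occ_AE:
  assumes pos: "measure \<nu> (C0 w) > 0"
  shows "AE \<omega> in \<nu>. \<forall>k. \<exists>t\<ge>k. occ w \<omega> t"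
proof -
  define Binf where "Binf = {\<omega>. \<forall>t. \<not> occ w \<omega> t}"
  define F where "F = {\<omega>. \<exists>k. \<forall>t\<ge>k. \<not> occ w \<omega> t}"
  have Binf_s: "Binf \<in> sets \<nu>"
  proof -
    have "Binf = (\<Inter>t\<in>UNIV. UNIV - {\<omega>. occ w \<omega> t})" unfolding Binf_def by auto
    then show ?thesis using occ_sets compl_sets by (auto intro!: INT_sets)
  qed
  define A where "A k = (shift ^^ k) -` Binf" for k
  have A_eq: "A k = {\<omega>. \<forall>t. \<not> occ w \<omega> (t + k)}" for k
    unfolding A_def Binf_def by (auto simp: occ_pow)
  have FA: "F = (\<Union>k. A k)"
  proof
    show "F \<subseteq> (\<Union>k. A k)"
    proof
      fix \<omega> assume "\<omega> \<in> F"
      then obtain k where k: "\<forall>t\<ge>k. \<not> occ w \<omega> t" unfolding F_def by blast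
      then have "\<omega> \<in> A k" unfolding A_eq by simp
      then show "\<omega> \<in> (\<Union>k. A k)" by blast
    qed
    show "(\<Union>k. A k) \<subseteq> F"
    proof
      fix \<omega> assume "\<omega> \<in> (\<Union>k. A k)"
      then obtain k where k: "\<forall>t. \<not> occ w \<omega> (t + k)" unfolding A_eq by blast
      have "\<forall>t\<ge>k. \<not> occ w \<omega> t"
      proof (intro allI impI)
        fix t assume "k \<le> t"
        then have "t = (t - k) + k" by simp
        then show "\<not> occ w \<omega> t" using k by metis
      qed
      then show "\<omega> \<in> F" unfolding F_def by blast
    qed
  qed
  have As: "range A \<subseteq> sets \<nu>" unfolding A_def using pow_sets[OF Binf_s] by auto
  have Ainc: "incseq A"
  proof (rule incseq_SucI)
    fix k show "A k \<subseteq> A (Suc k)" unfolding A_eq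
    proof (intro subsetI CollectI allI)
      fix \<omega> t assume "\<omega> \<in> {\<omega>. \<forall>t. \<not> occ w \<omega> (t + k)}"
      then have "\<not> occ w \<omega> (Suc t + k)" by blast
      then show "\<not> occ w \<omega> (t + Suc k)" by simp
    qed
  qed
  have Fs: "F \<in> sets \<nu>" using As FA by (auto intro!: UN_sets)
  have "emeasure \<nu> F = (SUP k. emeasure \<nu> (A k))" using SUP_emeasure_incseq[OF As Ainc] FA by simp
  also have "\<dots> = emeasure \<nu> Binf" unfolding A_def using pow_inv[OF Binf_s] by simp
  finally have FB: "emeasure \<nu> F = emeasure \<nu> Binf" .
  have disj: "Binf \<inter> C0 w = {}"
    unfolding Binf_def using occ_shift[of w _ 0] by auto
  have "measure \<nu> (Binf \<union> C0 w) = measure \<nu> Binf + measure \<nu> (C0 w)"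
    using disj Binf_s C0_sets fin by (intro measure_Union) auto
  moreover have "measure \<nu> (Binf \<union> C0 w) \<le> 1" using prob_space.prob_le_1[OF ps] by simp
  ultimately have "measure \<nu> Binf < 1" using pos by linarith
  then have "emeasure \<nu> F \<noteq> 1"
  proof -
    assume m: "measure \<nu> Binf < 1"
    have "emeasure \<nu> F = ennreal (measure \<nu> Binf)"
      using FB fin[of Binf] by (simp add: emeasure_eq_ennreal_measure)
    then show ?thesis using m measure_nonneg[of \<nu> Binf] by (auto simp: ennreal_1[symmetric] simp del: ennreal_1)
  qed
  moreover have "shift -` F = F"
  proof -
    have "shift -` F = {\<omega>. \<exists>k. \<forall>t\<ge>k. \<not> occ w \<omega> (Suc t)}" unfolding F_def by (simp add: occ_shift1)
    also have "\<dots> = F"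
    proof (rule set_eqI, rule iffI)
      fix \<omega> assume "\<omega> \<in> {\<omega>. \<exists>k. \<forall>t\<ge>k. \<not> occ w \<omega> (Suc t)}"
      then obtain k where k: "\<forall>t\<ge>k. \<not> occ w \<omega> (Suc t)" by blast
      have "\<forall>t\<ge>Suc k. \<not> occ w \<omega> t"
      proof (intro allI impI)
        fix t assume "Suc k \<le> t"
        then obtain t' where "t = Suc t'" "k \<le> t'" by (cases t) auto
        then show "\<not> occ w \<omega> t" using k by simp
      qed
      then show "\<omega> \<in> F" unfolding F_def by blast
    next
      fix \<omega> assume "\<omega> \<in> F"
      then obtain k where k: "\<forall>t\<ge>k. \<not> occ w \<omega> t" unfolding F_def by blast
      then have "\<forall>t\<ge>k. \<not> occ w \<omega> (Suc t)" by simp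
      then show "\<omega> \<in> {\<omega>. \<exists>k. \<forall>t\<ge>k. \<not> occ w \<omega> (Suc t)}" by blast
    qed
    finally show ?thesis .
  qed
  ultimately have "emeasure \<nu> F = 0" using ergodic[OF Fs] by blast
  then have "F \<in> null_sets \<nu>" using Fs by auto
  then show ?thesis
    by (rule AE_I') (auto simp: F_def space_eq)
qed

end


section \<open>Deterministic analysis\<close>

definition W :: "(nat \<Rightarrow> 'i) \<Rightarrow> nat \<Rightarrow> nat \<Rightarrow> 'i list" where
  "W \<omega> x y = map \<omega> [x..<y]"

lemma W_split: "x \<le> y \<Longrightarrow> y \<le> z \<Longrightarrow> W \<omega> x z = W \<omega> x y @ W \<omega> y z"
proof -
  assume a: "x \<le> y" "y \<le> z"
  then have "[x..<z] = [x..<y] @ [y..<z]"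
    using upt_add_eq_append[of x y "z - y"] by simp
  then show ?thesis unfolding W_def by simp
qed

lemma W_len[simp]: "length (W \<omega> x y) = y - x"
  unfolding W_def by simp

lemma W_occ: "occ w \<omega> t \<Longrightarrow> W \<omega> t (t + length w) = w"
  unfolding W_def occ_def by (intro nth_equalityI) auto

context mats
begin

lemma sum_bound:
  fixes \<omega> :: "nat \<Rightarrow> 'i" and w :: "'i list" and lam \<beta> :: real and Kd T n0 n1 :: nat
  assumes N0: "0 < N" and a1: "a \<le> 1"
    and \<beta>: "0 < \<beta>" "\<And>i j. i < N \<Longrightarrow> j < N \<Longrightarrow> \<beta> \<le> P w i j"
    and lam: "0 < lam" and Kd: "0 < Kd" "ln (1 / a) / real Kd \<le> lam / 4"
    and occT: "occ w \<omega> T"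
    and inf: "\<And>k. \<exists>t\<ge>k. occ w \<omega> t"
    and gap: "\<And>n. n \<ge> n0 \<Longrightarrow> occ w \<omega> n \<Longrightarrow> \<exists>t. n < t \<and> t \<le> n + n div Kd \<and> occ w \<omega> t"
    and grow: "\<And>n. n \<ge> n1 \<Longrightarrow> exp (lam * real n / 2) \<le> ms (P (W \<omega> 0 n))"
  shows "\<exists>R. \<forall>m\<ge>T + length w. (\<Sum>n<m. ms (P (W \<omega> n m))) \<le> R * ms (P (W \<omega> (T + length w) m))"
proof -
  define L where "L = length w"
  define s where "s = T + L"
  define G where "G = max 1 (real N * Cb)"
  define ia where "ia = 1 / a"
  have G1: "1 \<le> G" unfolding G_def by simp
  have NCbG: "real N * Cb \<le> G" unfolding G_def by simp
  have NCb0: "0 \<le> real N * Cb" using NCb_nn[OF N0] by simp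
  have ia1: "1 \<le> ia" unfolding ia_def using a0 a1 by simp
  obtain ts where ts: "ts \<ge> s + n0 + n1 + 1" "occ w \<omega> ts" using inf by blast
  define n2 where "n2 = ts + L"
  define \<rho> where "\<rho> = exp (- lam / 8)"
  define C1 where "C1 = G ^ s + ia ^ n2"
  define C2 where "C2 = G ^ s * exp (lam * real L / 8) / \<beta>"
  define b where "b n = (if n < n2 then C1 else C2 * \<rho> ^ n)" for n
  have \<rho>: "0 < \<rho>" "\<rho> < 1" unfolding \<rho>_def using lam by auto
  have X0: "\<And>m. 0 \<le> ms (P (W \<omega> s m))" by (rule ms_nn)
  have pw: "ms (P (W \<omega> n m)) \<le> b n * ms (P (W \<omega> s m))" if nm: "n < m" "s \<le> m" for n m
  proof (cases "n \<le> s")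
    case True
    have "ms (P (W \<omega> n m)) \<le> (real N * Cb) ^ (s - n) * ms (P (W \<omega> s m))"
      using ms_app_le[OF N0, of "W \<omega> n s" "W \<omega> s m"] W_split[OF True nm(2), of \<omega>] by simp
    also have "\<dots> \<le> G ^ s * ms (P (W \<omega> s m))"
    proof (rule mult_right_mono[OF _ X0])
      have "(real N * Cb) ^ (s - n) \<le> G ^ (s - n)" using NCbG NCb0 by (intro power_mono) auto
      also have "\<dots> \<le> G ^ s" using G1 by (intro power_increasing) auto
      finally show "(real N * Cb) ^ (s - n) \<le> G ^ s" .
    qed
    finally have A: "ms (P (W \<omega> n m)) \<le> G ^ s * ms (P (W \<omega> s m))" .
    show ?thesis
    proof (cases "n < n2")
      case True
      have "G ^ s * ms (P (W \<omega> s m)) \<le> C1 * ms (P (W \<omega> s m))"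
        unfolding C1_def using ia1 by (intro mult_right_mono X0) auto
      then show ?thesis using A True unfolding b_def by simp
    next
      case False
      then have "n \<ge> n2" by simp
      moreover have "n2 > s" unfolding n2_def using ts(1) by simp
      ultimately show ?thesis using \<open>n \<le> s\<close> by simp
    qed
  next
    case False
    then have sn: "s < n" by simp
    have A: "a ^ (n - s) * ms (P (W \<omega> n m)) \<le> ms (P (W \<omega> s m))"
      using ms_app_ge[of "W \<omega> s n" "W \<omega> n m"] W_split[of s n m \<omega>] sn nm by simp
    show ?thesis
    proof (cases "n < n2")
      case True
      have "ms (P (W \<omega> n m)) = ia ^ (n - s) * (a ^ (n - s) * ms (P (W \<omega> n m)))"
        unfolding ia_def using a0 by (simp add: power_one_over field_simps)
      also have "\<dots> \<le> ia ^ (n - s) * ms (P (W \<omega> s m))"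
        using A ia1 by (intro mult_left_mono) auto
      also have "\<dots> \<le> C1 * ms (P (W \<omega> s m))"
      proof (rule mult_right_mono[OF _ X0])
        have "ia ^ (n - s) \<le> ia ^ n2" using ia1 True by (intro power_increasing) auto
        then show "ia ^ (n - s) \<le> C1" unfolding C1_def using G1 by (smt (verit) zero_le_power)
      qed
      finally show ?thesis unfolding b_def using True by simp
    next
      case False
      then have n2n: "n2 \<le> n" by simp
      define S where "S = {t. occ w \<omega> t \<and> T \<le> t \<and> t + L \<le> n}"
      have Sfin: "finite S" unfolding S_def by (rule finite_subset[of _ "{..n}"]) auto
      have tsS: "ts \<in> S" unfolding S_def using ts n2n unfolding n2_def s_def by auto
      define t where "t = Max S"
      have tS: "t \<in> S" unfolding t_def using Sfin tsS by (intro Max_in) auto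
      have tts: "ts \<le> t" unfolding t_def using Sfin tsS by (intro Max_ge) auto
      have tocc: "occ w \<omega> t" and tL: "t + L \<le> n" using tS unfolding S_def by auto
      have st: "s \<le> t" "n0 \<le> t" "n1 \<le> t" using tts ts(1) by auto
      obtain t' where t': "t < t'" "t' \<le> t + t div Kd" "occ w \<omega> t'" using gap[OF st(2) tocc] by blast
      have "t' \<notin> S" using t'(1) Sfin unfolding t_def using Max_ge leD by blast
      then have "n < t' + L" using t' st unfolding S_def s_def by auto
      then have gapn: "n - t - L \<le> t div Kd" using t'(2) by linarith
      have Wdec: "W \<omega> s m = W \<omega> s t @ w @ (W \<omega> (t + L) n @ W \<omega> n m)"
      proof -
        have "W \<omega> s m = W \<omega> s t @ W \<omega> t m" using W_split[of s t m \<omega>] st(1) tL nm by simp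
        also have "W \<omega> t m = W \<omega> t (t + L) @ W \<omega> (t + L) m" using W_split[of t "t + L" m \<omega>] tL nm by simp
        also have "W \<omega> (t + L) m = W \<omega> (t + L) n @ W \<omega> n m" using W_split[of "t + L" n m \<omega>] tL nm by simp
        finally show ?thesis using W_occ[OF tocc] unfolding L_def by simp
      qed
      have B1: "\<beta> * ms (P (W \<omega> s t)) * ms (P (W \<omega> (t + L) n @ W \<omega> n m)) \<le> ms (P (W \<omega> s m))"
        unfolding Wdec by (rule block_ms[OF \<beta>(2)]) (use \<beta> in auto)
      have B2: "a ^ (n - (t + L)) * ms (P (W \<omega> n m)) \<le> ms (P (W \<omega> (t + L) n @ W \<omega> n m))"
        using ms_app_ge[of "W \<omega> (t + L) n" "W \<omega> n m"] by simp
      have B3: "exp (lam * real t / 2) \<le> G ^ s * ms (P (W \<omega> s t))"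
      proof -
        have "exp (lam * real t / 2) \<le> ms (P (W \<omega> 0 t))" using grow st(3) by simp
        also have "\<dots> \<le> (real N * Cb) ^ s * ms (P (W \<omega> s t))"
          using ms_app_le[OF N0, of "W \<omega> 0 s" "W \<omega> s t"] W_split[of 0 s t \<omega>] st(1) by simp
        also have "\<dots> \<le> G ^ s * ms (P (W \<omega> s t))"
          using NCbG NCb0 by (intro mult_right_mono ms_nn power_mono) auto
        finally show ?thesis .
      qed
      define k where "k = n - (t + L)"
      have k: "k \<le> t div Kd" unfolding k_def using gapn by simp
      have iak: "ia ^ k \<le> exp (lam * real t / 4)"
      proof -
        have "0 < ia" using ia1 by simp
        then have "ia ^ k = exp (real k * ln ia)" by (simp add: exp_of_nat_mult)
        also have "\<dots> \<le> exp (real t / real Kd * ln ia)"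
        proof -
          have "real k \<le> real t / real Kd" using k Kd(1)
            by (metis of_nat_le_iff of_nat_div_le_of_nat order.trans)
          then show ?thesis using ia1 by (intro exp_mono mult_right_mono) auto
        qed
        also have "\<dots> = exp (real t * (ln (1 / a) / real Kd))" unfolding ia_def by (simp add: field_simps)
        also have "\<dots> \<le> exp (real t * (lam / 4))" using Kd(2) by (intro exp_mono mult_left_mono) auto
        finally show ?thesis by (simp add: field_simps)
      qed
      have msP: "ms (P (W \<omega> n m)) \<le> C2 * \<rho> ^ n * ms (P (W \<omega> s m))"
      proof -
        have ak: "a ^ k * ia ^ k = 1" unfolding ia_def using a0 by (simp add: power_one_over)
        have e0: "0 < exp (lam * real t / 2)" by simp
        have "\<beta> * exp (lam * real t / 2) * (a ^ k * ms (P (W \<omega> n m)))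
              \<le> \<beta> * (G ^ s * ms (P (W \<omega> s t))) * ms (P (W \<omega> (t + L) n @ W \<omega> n m))"
          using B2 B3 \<beta>(1) a0 G1 unfolding k_def
          by (intro mult_mono mult_left_mono) (auto intro!: mult_nonneg_nonneg ms_nn)
        also have "\<dots> \<le> G ^ s * ms (P (W \<omega> s m))" using B1 G1
          by (metis (no_types, lifting) mult.assoc mult.left_commute mult_left_mono zero_le_power order.trans zero_le_one)
        finally have 1: "\<beta> * exp (lam * real t / 2) * (a ^ k * ms (P (W \<omega> n m))) \<le> G ^ s * ms (P (W \<omega> s m))" .
        have "ms (P (W \<omega> n m)) = ia ^ k * (a ^ k * ms (P (W \<omega> n m)))" using ak by (simp add: algebra_simps)
        also have "\<dots> \<le> ia ^ k * (G ^ s * ms (P (W \<omega> s m)) / (\<beta> * exp (lam * real t / 2)))"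
          using 1 \<beta>(1) ia1 by (intro mult_left_mono) (auto simp: field_simps)
        also have "\<dots> \<le> exp (lam * real t / 4) * (G ^ s * ms (P (W \<omega> s m)) / (\<beta> * exp (lam * real t / 2)))"
          using iak \<beta>(1) G1 by (intro mult_right_mono) (auto intro!: divide_nonneg_pos mult_nonneg_nonneg ms_nn)
        also have "\<dots> = G ^ s / \<beta> * exp (- lam * real t / 4) * ms (P (W \<omega> s m))"
          using \<beta>(1) by (simp add: field_simps exp_add[symmetric] exp_diff[symmetric])
        also have "\<dots> \<le> G ^ s / \<beta> * exp (lam * real L / 8 - lam * real n / 8) * ms (P (W \<omega> s m))"
        proof -
          have "real n < real t' + real L" using \<open>n < t' + L\<close> by linarith
          moreover have "real t' \<le> 2 * real t" using t'(2)
            by (metis div_le_dividend add_mono_thms_linordered_semiring(1) le_refl mult_2 of_nat_add of_nat_le_iff order.trans)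
          ultimately have "real n \<le> real L + 2 * real t" by linarith
          then have "lam * real n \<le> lam * (real L + 2 * real t)" using lam by (intro mult_left_mono) auto
          then have "- lam * real t / 4 \<le> lam * real L / 8 - lam * real n / 8" by (simp add: algebra_simps)
          then show ?thesis using \<beta>(1) G1 by (intro mult_right_mono mult_left_mono ms_nn) auto
        qed
        also have "\<dots> = C2 * \<rho> ^ n * ms (P (W \<omega> s m))"
        proof -
          have e1: "\<rho> ^ n = exp (- (lam * real n / 8))" unfolding \<rho>_def
            by (simp add: exp_of_nat_mult[symmetric] algebra_simps)
          have e2: "exp (lam * real L / 8 - lam * real n / 8) = exp (lam * real L / 8) * exp (- (lam * real n / 8))"
            by (simp add: exp_add[symmetric])
          show ?thesis unfolding C2_def e2 e1 by simp
        qed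
        finally show ?thesis .
      qed
      then show ?thesis unfolding b_def using False by simp
    qed
  qed
  define R where "R = real n2 * C1 + C2 / (1 - \<rho>)"
  have C2pos: "0 \<le> C2" unfolding C2_def using \<beta>(1) G1 by simp
  have bsum: "(\<Sum>n<m. b n) \<le> R" for m
  proof -
    have "(\<Sum>n<m. b n) \<le> (\<Sum>n<m. (if n < n2 then C1 else 0) + C2 * \<rho> ^ n)"
      unfolding b_def using C2pos \<rho> G1 ia1 unfolding C1_def by (intro sum_mono) auto
    also have "\<dots> = (\<Sum>n<m. (if n < n2 then C1 else 0)) + C2 * (\<Sum>n<m. \<rho> ^ n)"
      by (simp add: sum.distrib sum_distrib_left)
    also have "(\<Sum>n<m. (if n < n2 then C1 else 0)) \<le> real n2 * C1"
    proof -
      have "(\<Sum>n<m. (if n < n2 then C1 else 0)) = real (card ({..<m} \<inter> {n. n < n2})) * C1"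
        by (simp add: sum.If_cases)
      also have "\<dots> \<le> real n2 * C1"
      proof (rule mult_right_mono)
        have "card ({..<m} \<inter> {n. n < n2}) \<le> card {..<n2}" by (intro card_mono) auto
        then show "real (card ({..<m} \<inter> {n. n < n2})) \<le> real n2" by simp
        show "0 \<le> C1" using G1 ia1 unfolding C1_def by simp
      qed
      finally show ?thesis .
    qed
    also have "(\<Sum>n<m. \<rho> ^ n) \<le> 1 / (1 - \<rho>)"
    proof -
      have r1: "\<rho> - 1 \<noteq> 0" "1 - \<rho> \<noteq> 0" using \<rho> by auto
      have "(\<Sum>n<m. \<rho> ^ n) = (\<rho> ^ m - 1) / (\<rho> - 1)" using \<rho> by (simp add: geometric_sum[of \<rho>])
      also have "\<dots> = (1 - \<rho> ^ m) / (1 - \<rho>)" using r1 by (simp add: field_simps)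
      also have "\<dots> \<le> 1 / (1 - \<rho>)" using \<rho> by (simp add: divide_right_mono)
      finally show ?thesis .
    qed
    finally show ?thesis unfolding R_def using C2pos by (simp add: mult_left_mono divide_simps)
  qed
  show ?thesis
  proof (intro exI allI impI)
    fix m assume m: "T + length w \<le> m"
    have "(\<Sum>n<m. ms (P (W \<omega> n m))) \<le> (\<Sum>n<m. b n * ms (P (W \<omega> s m)))"
      using pw m unfolding s_def L_def by (intro sum_mono) auto
    also have "\<dots> = (\<Sum>n<m. b n) * ms (P (W \<omega> s m))" by (simp add: sum_distrib_right)
    also have "\<dots> \<le> R * ms (P (W \<omega> s m))" using bsum X0 by (intro mult_right_mono) auto
    finally show "(\<Sum>n<m. ms (P (W \<omega> n m))) \<le> R * ms (P (W \<omega> (T + length w) m))" unfolding s_def L_def .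
  qed
qed

end


lemma pgf_comp_app: "pgf_comp N f (xs @ ys) s = pgf_comp N f xs (pgf_comp N f ys s)"
  by (induction xs) auto

lemma comp_mono:
  assumes laws: "\<forall>\<theta> i. i < N \<longrightarrow> offspring_law N (f \<theta> i)"
    and s: "inbox N s" and t: "inbox N t" and st: "\<And>j. j < N \<Longrightarrow> s j \<le> t j"
  shows "i < N \<Longrightarrow> pgf_comp N f xs s i \<le> pgf_comp N f xs t i"
proof (induction xs arbitrary: i)
  case Nil then show ?case using st by simp
next
  case (Cons \<theta> xs)
  have "pgf N (f \<theta> i) (pgf_comp N f xs s) \<le> pgf N (f \<theta> i) (pgf_comp N f xs t)"
    using Cons laws comp_box[OF laws s] comp_box[OF laws t] by (intro pgf_mono) auto
  then show ?case using Cons.prems by (simp add: pgf_vec_def)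
qed

lemma cc_W: "a \<le> m \<Longrightarrow> cc N K M (W \<omega> a m) = 1 + K * (\<Sum>n\<in>{a..<m}. mat_sum N (Mprod N M (W \<omega> n m)))"
proof (induction "m - a" arbitrary: a)
  case 0
  then have "a = m" by simp
  then show ?case by (simp add: W_def)
next
  case (Suc d)
  then have am: "a < m" by simp
  have W: "W \<omega> a m = \<omega> a # W \<omega> (Suc a) m" unfolding W_def using am by (simp add: upt_conv_Cons)
  have IH: "cc N K M (W \<omega> (Suc a) m) = 1 + K * (\<Sum>n\<in>{Suc a..<m}. mat_sum N (Mprod N M (W \<omega> n m)))"
    using Suc by simp
  have "cc N K M (W \<omega> a m) = cc N K M (W \<omega> (Suc a) m) + K * mat_sum N (Mprod N M (W \<omega> a m))"
    unfolding W by simp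
  also have "\<dots> = 1 + K * (\<Sum>n\<in>{a..<m}. mat_sum N (Mprod N M (W \<omega> n m)))"
    unfolding IH using am by (simp add: sum.atLeast_Suc_lessThan algebra_simps)
  finally show ?case .
qed

lemma W_Suc: "W \<omega> 0 (Suc m) = W \<omega> 0 m @ [\<omega> m]"
  unfolding W_def by simp

lemma ext_conv:
  assumes laws: "\<forall>\<theta> i. i < N \<longrightarrow> offspring_law N (f \<theta> i)" and k: "k < N"
  shows "\<exists>L. (\<lambda>m. pgf_comp N f (W \<omega> 0 m) (\<lambda>_. 0) k) \<longlonglongrightarrow> L"
proof -
  let ?X = "\<lambda>m. pgf_comp N f (W \<omega> 0 m) (\<lambda>_. 0) k"
  have z: "inbox N (\<lambda>_. 0)" unfolding inbox_def by simp
  have "incseq ?X"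
  proof (rule incseq_SucI)
    fix m
    have "pgf_comp N f (W \<omega> 0 m) (\<lambda>_. 0) k \<le> pgf_comp N f (W \<omega> 0 m) (pgf_comp N f [\<omega> m] (\<lambda>_. 0)) k"
      using comp_box[OF laws z, of "[\<omega> m]"] k unfolding inbox_def
      by (intro comp_mono[OF laws z comp_box[OF laws z]]) auto
    then show "?X m \<le> ?X (Suc m)" unfolding W_Suc pgf_comp_app .
  qed
  moreover have "\<forall>m. ?X m \<le> 1" using comp_box[OF laws z] k unfolding inbox_def by blast
  ultimately obtain L where "?X \<longlonglongrightarrow> L" by (rule incseq_convergent)
  then show ?thesis by blast
qed

theorem corollary4p5:
  fixes N :: nat
    and \<nu> :: "(nat \<Rightarrow> 'i::countable) measure"
    and f :: "'i \<Rightarrow> nat \<Rightarrow> (nat \<Rightarrow> nat) \<Rightarrow> real"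
    and Mbound :: real
    and lyap :: real
  assumes N2: "2 \<le> N"
    and erg: "ergodic_shift_measure \<nu>"
    and laws: "\<forall>\<theta> i. i < N \<longrightarrow> offspring_law N (f \<theta> i)"
    and finite_means: "\<forall>\<theta> i k. i < N \<longrightarrow> k < N \<longrightarrow>
                         (\<lambda>z. real (z k) * f \<theta> i z) summable_on vecs N"
    and good: "good N \<nu> (mean_matrix N f)"
    and unif: "unif_allowable N f"
    and second: "\<forall>\<theta> k i j. k < N \<longrightarrow> i < N \<longrightarrow> j < N \<longrightarrow>
                   second_deriv_term i j f \<theta> k summable_on vecs N
                   \<and> second_deriv N f \<theta> k i j < Mbound"
    and lyap_lim: "AE \<omega> in \<nu>. (\<lambda>n. ln (mat_sum N (Mprod N (mean_matrix N f) (map \<omega> [0..<n]))) / real n)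
                      \<longlonglongrightarrow> lyap"
    and lyap_pos: "lyap > 0"
  shows "AE \<omega> in \<nu>. \<forall>k<N. extinction_prob N f \<omega> k < 1"
proof -
  have N0: "0 < N" using N2 by simp
  let ?V = "vecs N"
  let ?M = "mean_matrix N f"
  obtain \<alpha> where \<alpha>0: "0 < \<alpha>" and \<alpha>inf: "\<alpha> < Inf {(\<Sum>\<^sub>\<infinity> w\<in>{w\<in>vecs N. w i \<noteq> 0}. f \<theta> k w) | \<theta> k i.
            k < N \<and> i < N \<and> mean_matrix N f \<theta> k i > 0}"
    using unif unfolding unif_allowable_def by blast
  have pos: "\<alpha> \<le> ?M \<theta> k i" if ki: "k < N" "i < N" "?M \<theta> k i > 0" for \<theta> k i
  proof -
    let ?S = "{(\<Sum>\<^sub>\<infinity> w\<in>{w\<in>vecs N. w i \<noteq> 0}. f \<theta> k w) | \<theta> k i.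
            k < N \<and> i < N \<and> mean_matrix N f \<theta> k i > 0}"
    have mem: "(\<Sum>\<^sub>\<infinity> w\<in>{w\<in>vecs N. w i \<noteq> 0}. f \<theta> k w) \<in> ?S" using ki by blast
    have bdd: "bdd_below ?S"
    proof (rule bdd_belowI)
      fix x assume "x \<in> ?S"
      then obtain \<theta>' k' i' where x: "x = (\<Sum>\<^sub>\<infinity> w\<in>{w\<in>vecs N. w i' \<noteq> 0}. f \<theta>' k' w)" "k' < N" by blast
      have "offspring_law N (f \<theta>' k')" using laws x(2) by blast
      then show "0 \<le> x" unfolding x(1) using law_nonneg by (intro infsum_nonneg) auto
    qed
    have "Inf ?S \<le> (\<Sum>\<^sub>\<infinity> w\<in>{w\<in>vecs N. w i \<noteq> 0}. f \<theta> k w)" by (rule cInf_lower[OF mem bdd])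
    also have "\<dots> \<le> ?M \<theta> k i"
      unfolding mean_matrix_def
    proof (rule infsum_mono_neutral)
      have law: "offspring_law N (f \<theta> k)" using laws ki by blast
      show "f \<theta> k summable_on {w \<in> vecs N. w i \<noteq> 0}"
        by (rule summable_on_subset[OF law_summable[OF law]]) auto
      show "(\<lambda>z. real (z i) * f \<theta> k z) summable_on vecs N" using finite_means ki by blast
      fix x
      show "x \<in> {w \<in> vecs N. w i \<noteq> 0} \<inter> vecs N \<Longrightarrow> f \<theta> k x \<le> real (x i) * f \<theta> k x"
        using law_nonneg[OF law, of x] by (auto intro!: mult_left_le_one_le[of "f \<theta> k x" "real (x i)", THEN order_trans[rotated]] simp: mult_le_cancel_right1)
      show "x \<in> {w \<in> vecs N. w i \<noteq> 0} - vecs N \<Longrightarrow> f \<theta> k x \<le> 0" by auto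
      show "x \<in> vecs N - {w \<in> vecs N. w i \<noteq> 0} \<Longrightarrow> 0 \<le> real (x i) * f \<theta> k x" by auto
    qed
    finally show ?thesis using \<alpha>inf by linarith
  qed
  have mh: "moment_hyps N (f \<theta> i) Mbound \<alpha>" if i: "i < N" for \<theta> i
    unfolding moment_hyps_def
  proof (intro conjI allI impI)
    show "offspring_law N (f \<theta> i)" using laws i by blast
    show "(\<lambda>z. real (z j) * f \<theta> i z) summable_on vecs N" if "j < N" for j using finite_means i that by blast
    show "(\<lambda>z. real (z j) * (real (z l) - (if j = l then 1 else 0)) * f \<theta> i z) summable_on vecs N"
      if "j < N" "l < N" for j l using second i that unfolding second_deriv_term_def by blast
    show "mom2 N (f \<theta> i) j l < Mbound" if "j < N" "l < N" for j l
      using second i that unfolding second_deriv_def second_deriv_term_def mom2_def by blast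
    show "\<alpha> \<le> mom1 N (f \<theta> i) j" if "j < N" "0 < mom1 N (f \<theta> i) j" for j
      using pos[of i j \<theta>] i that by (simp add: mean_mom1)
    show "0 < \<alpha>" by (rule \<alpha>0)
  qed
  have Mb0: "0 < Mbound" using Mb_pos[OF mh[OF N0] N0] .
  define a where "a = min \<alpha> 1"
  define Cb where "Cb = Mbound + 1"
  have a0: "0 < a" "a \<le> 1" "a \<le> \<alpha>" unfolding a_def using \<alpha>0 by auto
  have allow: "\<And>\<theta>. allowable N (?M \<theta>)" using good unfolding good_def by blast
  interpret M: mats N ?M a Cb
  proof
    show "0 \<le> ?M \<theta> i k" if "i < N" "k < N" for \<theta> i k using mean_nonneg[OF laws] that by blast
    show "?M \<theta> i k \<le> Cb" if "i < N" "k < N" for \<theta> i k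
      using mom1_bound[OF mh[of i \<theta>, OF that(1)] that(2)] mh_sq_bound[OF mh[of i \<theta>, OF that(1)] that(2)]
      unfolding Cb_def mean_mom1 by linarith
    show "\<exists>i<N. a \<le> ?M \<theta> i k" if kN: "k < N" for \<theta> k
    proof -
      obtain i where i: "i < N" "0 < ?M \<theta> i k" using allow[of \<theta>] kN unfolding allowable_def by blast
      then show ?thesis using pos[of i k \<theta>] kN a0 by force
    qed
    show "\<exists>k<N. 0 < ?M \<theta> i k" if "i < N" for \<theta> i using allow[of \<theta>] that unfolding allowable_def by blast
    show "0 < a" by (rule a0)
  qed
  interpret E: erg \<nu> by unfold_locales (rule erg)
  obtain ws where ws: "ws \<noteq> []" "measure \<nu> {\<omega>\<in>space \<nu>. \<forall>j<length ws. \<omega> j = ws ! j} > 0"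
      "strictly_pos N (Mprod N ?M ws)"
    using good unfolding good_def by blast
  have C0pos: "measure \<nu> (C0 ws) > 0" using ws(2) unfolding C0_def E.space_eq by simp
  define \<beta> where "\<beta> = Min ((\<lambda>(i, j). Mprod N ?M ws i j) ` ({..<N} \<times> {..<N}))"
  have \<beta>le: "\<beta> \<le> Mprod N ?M ws i j" if "i < N" "j < N" for i j
    unfolding \<beta>_def using that by (intro Min_le) auto
  have \<beta>0: "0 < \<beta>"
  proof -
    have "\<beta> \<in> (\<lambda>(i, j). Mprod N ?M ws i j) ` ({..<N} \<times> {..<N})"
      unfolding \<beta>_def using N0 by (intro Min_in) auto
    then show ?thesis using ws(3) unfolding strictly_pos_def by auto
  qed
  define Kd where "Kd = nat \<lceil>4 * ln (1 / a) / lyap\<rceil> + 1"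
  have Kd0: "0 < Kd" unfolding Kd_def by simp
  have Kd1: "ln (1 / a) / real Kd \<le> lyap / 4"
  proof -
    have l0: "0 \<le> ln (1 / a)" using a0 by simp
    have "4 * ln (1 / a) / lyap \<le> real Kd" unfolding Kd_def by linarith
    then have "4 * ln (1 / a) \<le> real Kd * lyap" using lyap_pos by (simp add: divide_le_eq)
    then show ?thesis using Kd0 by (simp add: divide_le_eq algebra_simps)
  qed
  define K where "K = (2 * Mbound + 1) / \<alpha>^2"
  have K0: "0 \<le> K" unfolding K_def using Mb0 by simp
  have msnil: "M.ms (M.P []) = real N" by (simp add: mat_sum_def mat_id_def)
  have mspos: "0 < M.ms (M.P xs)" for xs
  proof -
    have "a ^ length xs * M.ms (M.P []) \<le> M.ms (M.P (xs @ []))" by (rule M.ms_app_ge)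
    moreover have "0 < a ^ length xs * M.ms (M.P [])" unfolding msnil using a0 N0 by simp
    ultimately show ?thesis by simp
  qed
  have A3: "AE \<omega> in \<nu>. \<exists>n1. \<forall>n\<ge>n1. exp (lyap * real n / 2) \<le> M.ms (M.P (W \<omega> 0 n))"
    using lyap_lim
  proof eventually_elim
    case (elim \<omega>)
    have "eventually (\<lambda>n. lyap / 2 < ln (mat_sum N (Mprod N ?M (map \<omega> [0..<n]))) / real n) sequentially"
      using order_tendstoD(1)[OF elim, of "lyap / 2"] lyap_pos by linarith
    then obtain n1 where n1: "\<And>n. n \<ge> n1 \<Longrightarrow> lyap / 2 < ln (mat_sum N (Mprod N ?M (map \<omega> [0..<n]))) / real n"
      unfolding eventually_sequentially by blast
    show ?case
    proof (intro exI[of _ "Suc n1"] allI impI)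
      fix n assume n: "Suc n1 \<le> n"
      then have "lyap / 2 < ln (M.ms (M.P (W \<omega> 0 n))) / real n" using n1 unfolding W_def by simp
      then have "lyap * real n / 2 < ln (M.ms (M.P (W \<omega> 0 n)))" using n by (simp add: field_simps)
      then have "exp (lyap * real n / 2) < exp (ln (M.ms (M.P (W \<omega> 0 n))))" by simp
      then show "exp (lyap * real n / 2) \<le> M.ms (M.P (W \<omega> 0 n))" using mspos by simp
    qed
  qed
  have A1: "AE \<omega> in \<nu>. \<forall>k. \<exists>t\<ge>k. occ ws \<omega> t" by (rule E.infinite_occ_AE[OF C0pos])
  have A2: "AE \<omega> in \<nu>. \<exists>n0. \<forall>n\<ge>n0. occ ws \<omega> n \<longrightarrow> (\<exists>t. n < t \<and> t \<le> n + n div Kd \<and> occ ws \<omega> t)"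
    by (rule E.gap_AE[OF Kd0])
  show ?thesis using A1 A2 A3
  proof eventually_elim
    case (elim \<omega>)
    obtain T where T: "occ ws \<omega> T" using elim(1) by blast
    obtain n0 where n0: "\<And>n. n \<ge> n0 \<Longrightarrow> occ ws \<omega> n \<Longrightarrow> \<exists>t. n < t \<and> t \<le> n + n div Kd \<and> occ ws \<omega> t"
      using elim(2) by blast
    obtain n1 where n1: "\<And>n. n \<ge> n1 \<Longrightarrow> exp (lyap * real n / 2) \<le> M.ms (M.P (W \<omega> 0 n))"
      using elim(3) by blast
    obtain R where R: "\<And>m. m \<ge> T + length ws \<Longrightarrow> (\<Sum>n<m. M.ms (M.P (W \<omega> n m))) \<le> R * M.ms (M.P (W \<omega> (T + length ws) m))"
      using M.sum_bound[OF N0 a0(2) \<beta>0 \<beta>le lyap_pos Kd0 Kd1 T elim(1)[rule_format] n0 n1] by blast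
    define L where "L = length ws"
    define s where "s = T + L"
    define X where "X m = M.ms (M.P (W \<omega> s m))" for m
    define R' where "R' = max R 0"
    have X0: "0 \<le> X m" for m unfolding X_def by (rule M.ms_nn)
    have R': "(\<Sum>n<m. M.ms (M.P (W \<omega> n m))) \<le> R' * X m" if "m \<ge> s" for m
    proof -
      have "(\<Sum>n<m. M.ms (M.P (W \<omega> n m))) \<le> R * X m" using R that unfolding X_def s_def L_def by blast
      also have "\<dots> \<le> R' * X m" unfolding R'_def using X0 by (intro mult_right_mono) auto
      finally show ?thesis .
    qed
    have R'0: "0 \<le> R'" unfolding R'_def by simp
    define B0 where "B0 = (real N * Cb) ^ s"
    have B0: "0 < B0" unfolding B0_def Cb_def using N0 Mb0 by simp
    obtain mA :: nat where mA: "2 * B0 / lyap \<le> real mA" using real_arch_simple by blast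
    define m0 where "m0 = max s (max n1 mA)"
    have X1: "1 \<le> X m" if m: "m \<ge> m0" for m
    proof -
      have "M.ms (M.P (W \<omega> 0 m)) \<le> B0 * X m"
        using M.ms_app_le[OF N0, of "W \<omega> 0 s" "W \<omega> s m"] W_split[of 0 s m \<omega>] m
        unfolding B0_def X_def m0_def by simp
      moreover have "exp (lyap * real m / 2) \<le> M.ms (M.P (W \<omega> 0 m))" using n1 m unfolding m0_def by simp
      moreover have "B0 \<le> exp (lyap * real m / 2)"
      proof -
        have "2 * B0 / lyap \<le> real m" using mA m unfolding m0_def by linarith
        then have "2 * B0 \<le> lyap * real m" using lyap_pos by (simp add: divide_le_eq mult.commute)
        then have "B0 \<le> lyap * real m / 2" by simp
        also have "\<dots> \<le> exp (lyap * real m / 2)" using exp_ge_add_one_self[of "lyap * real m / 2"] by linarith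
        finally show ?thesis .
      qed
      ultimately have "B0 * 1 \<le> B0 * X m" by simp
      then show ?thesis using B0 by simp
    qed
    show "\<forall>k<N. extinction_prob N f \<omega> k < 1"
    proof (intro allI impI)
      fix k assume k: "k < N"
      define r where "r = rs N (M.P (W \<omega> 0 T)) k"
      have r0: "0 < r" unfolding r_def by (rule M.rs_pos[OF k])
      define c where "c = \<beta> * r / (1 + K * R')"
      have c0: "0 < c" unfolding c_def using \<beta>0 r0 K0 R'0 by (simp add: add_pos_nonneg)
      have bnd: "pgf_comp N f (W \<omega> 0 m) (\<lambda>_. 0) k \<le> 1 - c" if m: "m \<ge> m0" for m
      proof -
        have ms: "m \<ge> s" using m unfolding m0_def by simp
        let ?rs = "rs N (M.P (W \<omega> 0 m)) k"
        let ?cc = "cc N K ?M (W \<omega> 0 m)"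
        have itall: "\<forall>i<N. rs N (Mprod N ?M (W \<omega> 0 m)) i / cc N ((2 * Mbound + 1) / \<alpha>^2) ?M (W \<omega> 0 m)
                \<le> 1 - pgf_comp N f (W \<omega> 0 m) (\<lambda>_. 0) i"
          by (rule iteration[where N=N and f=f and Mb=Mbound and \<alpha>=\<alpha> and ws="W \<omega> 0 m", OF mh N0])
        have it: "?rs / ?cc \<le> 1 - pgf_comp N f (W \<omega> 0 m) (\<lambda>_. 0) k"
          using itall[rule_format, OF k] unfolding K_def .
        have cc: "?cc \<le> 1 + K * (R' * X m)"
        proof -
          have "?cc = 1 + K * (\<Sum>n<m. M.ms (M.P (W \<omega> n m)))"
            by (subst cc_W) (simp_all add: atLeast0LessThan)
          also have "\<dots> \<le> 1 + K * (R' * X m)" using R'[OF ms] K0 by (simp add: mult_left_mono)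
          finally show ?thesis .
        qed
        have cc1: "1 \<le> ?cc" by (rule cc_ge1[OF K0]) (rule mean_nonneg[OF laws])
        have rsb: "\<beta> * r * X m \<le> ?rs"
        proof -
          have "W \<omega> 0 m = W \<omega> 0 T @ ws @ W \<omega> s m"
          proof -
            have "W \<omega> 0 m = W \<omega> 0 T @ W \<omega> T m" using W_split[of 0 T m \<omega>] ms unfolding s_def by simp
            also have "W \<omega> T m = W \<omega> T s @ W \<omega> s m" using W_split[of T s m \<omega>] ms unfolding s_def by simp
            finally show ?thesis using W_occ[OF T] unfolding s_def L_def by simp
          qed
          then show ?thesis unfolding r_def X_def using M.block_rs[where w=ws and \<beta>=\<beta> and i=k and xs="W \<omega> 0 T" and ys="W \<omega> s m", OF \<beta>le _ k] \<beta>0 by simp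
        qed
        have rs0: "0 \<le> ?rs" by (rule M.rs_nn[OF k])
        have "c \<le> \<beta> * r * X m / (1 + K * (R' * X m))"
        proof -
          have d1: "0 < 1 + K * R'" using K0 R'0 by (simp add: add_pos_nonneg)
          have d2: "0 < 1 + K * (R' * X m)" using K0 R'0 X0 by (simp add: add_pos_nonneg)
          have "\<beta> * r * (1 + K * (R' * X m)) \<le> \<beta> * r * X m * (1 + K * R')"
          proof -
            have "1 + K * (R' * X m) \<le> X m * (1 + K * R')" using X1[OF m] by (simp add: algebra_simps)
            then show ?thesis using \<beta>0 r0 by (simp add: mult_left_mono mult.assoc)
          qed
          then show ?thesis unfolding c_def using d1 d2 by (simp add: divide_simps)
        qed
        also have "\<dots> \<le> ?rs / (1 + K * (R' * X m))"
          using rsb K0 R'0 X0 by (intro divide_right_mono) (auto simp: add_nonneg_nonneg)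
        also have "\<dots> \<le> ?rs / ?cc"
          using cc cc1 rs0 by (intro divide_left_mono) (auto intro: mult_pos_pos)
        also have "\<dots> \<le> 1 - pgf_comp N f (W \<omega> 0 m) (\<lambda>_. 0) k" by (rule it)
        finally show ?thesis by simp
      qed
      obtain Lq where conv: "(\<lambda>m. pgf_comp N f (W \<omega> 0 m) (\<lambda>_. 0) k) \<longlonglongrightarrow> Lq"
        using ext_conv[OF laws k] by blast
      have "extinction_prob N f \<omega> k = Lq"
        unfolding extinction_prob_def using conv unfolding W_def by (rule limI)
      moreover have "Lq \<le> 1 - c" using conv bnd by (intro LIMSEQ_le_const2) auto
      ultimately show "extinction_prob N f \<omega> k < 1" using c0 by simp
    qed
  qed
qed

end
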